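(* Let $P$ be a nondeterministic probabilistic program with CFG $(V_p,V_r,L,\to)$, linear invariant $I$, and a PLCS $h$ with respect to $I$. If $P$ has the concentration property and the bounded update property, then $\mathrm{supval}(\mathbf{v})\ge h(\ell_{in},\mathbf{v})$ for all initial valuations $\mathbf{v}\in I(\ell_{in})$.
   Context: Program model. A program is given by its control-flow graph (CFG) $(V_p,V_r,L,\to)$: $V_p$ is a finite set of real-valued program variables, $V_r$ a finite set of sampling variables, each $r\in V_r$ having a fixed probability distribution on $\mathbb{R}$; a valuation over a set $V$ is a map $V\to\mathbb{R}$, and $\mathrm{Val}(V)$ is the set of valuations. The finite label set $L$ is partitioned into assignment labels $L_a$, branching labels $L_b$, probabilistic labels $L_p$, nondeterministic labels $L_{nd}$, tick labels $L_t$, and a terminal label $\ell_{out}$; $\ell_{in}$ is the initial label. An assignment label $\ell$ has a unique successor $\ell'$ and a polynomial update function $F_\ell:\mathrm{Val}(V_p)\times\mathrm{Val}(V_r)\to\mathrm{Val}(V_p)$; a branching label has a condition $\phi$ over $V_p$ with successor $\ell_1$ if $\phi$ holds and $\ell_2$ otherwise; a probabilistic label has $p\in[0,1]$ and goes to successor $\ell_1$ with probability $p$ and $\ell_2$ with probability $1-p$; a nondeterministic label has two successors; a tick label has a unique successor $\ell'$ and a polynomial cost function $R_\ell:\mathrm{Val}(V_p)\to\mathbb{R}$. Only assignments change the valuation. A configuration is a pair $(\ell,\mathbf{v})$; a run is an infinite sequence of configurations. A scheduler maps every finite run ending in a configuration with a nondeterministic label to one of that label's successors. Given a scheduler $\sigma$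 and initial valuation $\mathbf{v}$, runs start at $(\ell_{in},\mathbf{v})$ and evolve as follows: at $\ell_{out}$ the run stays forever; at an assignment label a fresh valuation $\mathbf{u}$ of $V_r$ is sampled independently (each $r$ from its distribution) and the next configuration is $(\ell',F_\ell(\mathbf{v},\mathbf{u}))$; branching/probabilistic/nondeterministic/tick labels move to the successor determined by the condition/coin/scheduler/unique successor without changing the valuation. This yields a probability measure $\mathbb{P}^\sigma_{\mathbf{v}}$ on runs with expectation $\mathbb{E}^\sigma_{\mathbf{v}}$. For a run $\{(\ell_n,\mathbf{v}_n)\}_n$, the step cost is $C_m=R_{\ell_m}(\mathbf{v}_m)$ if $\ell_m\in L_t$ and $C_m=0$ otherwise; $C_\infty=\sum_{m=0}^\infty C_m$; and $\mathrm{supval}(\mathbf{v})=\sup_\sigma\mathbb{E}^\sigma_{\mathbf{v}}(C_\infty)$. The termination time is $T=\min\{n\mid \ell_n=\ell_{out}\}$ ($\min\emptyset=\infty$). Invariant. A linear invariant is a map $I$ assigning to each label a finite union of polyhedra $I(\ell)\subseteq\mathrm{Val}(V_p)$ such that for every $\mathbf{v}\in I(\ell_{in})$, every configuration $(\ell,\mathbf{w})$ reachable from $(\ell_{in},\mathbf{v})$ satisfies $\mathbf{w}\in I(\ell)$. Pre-expectation. For $h:L\times\mathrm{Val}(V_p)\to\mathbb{R}$, $\mathrm{pre}_h(\ell,\mathbf{v})$ is: $h(\ell,\mathbf{v})$ if $\ell=\ell_{out}$; $\mathbb{E}_{\mathbf{u}}[h(\ell',F_\ell(\mathbf{v},\mathbf{u}))]$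 if $\ell\in L_a$ (with $\mathbf{u}$ distributed as the sampling variables); $\mathbf{1}_{\mathbf{v}\models\phi}h(\ell_1,\mathbf{v})+\mathbf{1}_{\mathbf{v}\not\models\phi}h(\ell_2,\mathbf{v})$ if $\ell\in L_b$; $p\,h(\ell_1,\mathbf{v})+(1-p)h(\ell_2,\mathbf{v})$ if $\ell\in L_p$; $R_\ell(\mathbf{v})+h(\ell',\mathbf{v})$ if $\ell\in L_t$; the maximum of $h(\ell'',\mathbf{v})$ over the successors $\ell''$ of $\ell$ if $\ell\in L_{nd}$. PLCS. A polynomial lower cost submartingale (PLCS) of degree $d$ w.r.t. $I$ is $h:L\times\mathrm{Val}(V_p)\to\mathbb{R}$ such that (C1) each $h(\ell,\cdot)$ is a polynomial of degree at most $d$ in the program variables; (C2) $h(\ell_{out},\mathbf{v})=0$ for all $\mathbf{v}$; (C3') $\mathrm{pre}_h(\ell,\mathbf{v})\ge h(\ell,\mathbf{v})$ for all $\ell\ne\ell_{out}$ and all $\mathbf{v}\in I(\ell)$. Concentration property. For every initial valuation $\mathbf{v}\in I(\ell_{in})$ there are constants $a,b>0$ such that for all sufficiently large $n$ and all schedulers $\sigma$, $\mathbb{P}^\sigma_{\mathbf{v}}(T>n)\le a\cdot e^{-b\cdot n}$. Bounded update property. There is a constant $M>0$ such that for every assignment label $\ell$, every $\mathbf{v}\in I(\ell)$, every sampled valuation $\mathbf{u}$ of $V_r$ and every $x\in V_p$, $|F_\ell(\mathbf{v},\mathbf{u})(x)-\mathbf{v}(x)|\le M$. *)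

theory Defs
  imports "HOL-Probability.Probability"
begin

datatype ('l,'v,'r) lkind =
    Assign 'l "('v \<Rightarrow> real) \<Rightarrow> ('r \<Rightarrow> real) \<Rightarrow> ('v \<Rightarrow> real)"
  | Branch "('v \<Rightarrow> real) set" 'l 'l
  | Probab real 'l 'l
  | Nondet 'l 'l
  | Tick "('v \<Rightarrow> real) \<Rightarrow> real" 'l
  | Terminal

type_synonym ('l,'v) config = "'l \<times> ('v \<Rightarrow> real)"

definition poly_fun :: "nat \<Rightarrow> (('a::finite \<Rightarrow> real) \<Rightarrow> real) \<Rightarrow> bool" where
  "poly_fun d f \<longleftrightarrow>
     (\<exists>(E :: ('a \<Rightarrow> nat) set) (c :: ('a \<Rightarrow> nat) \<Rightarrow> real).
        finite E \<and> (\<forall>e\<in>E. (\<Sum>x\<in>UNIV. e x) \<le> d) \<and>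
        (\<forall>w. f w = (\<Sum>e\<in>E. c e * (\<Prod>x\<in>UNIV. w x ^ e x))))"

definition is_poly :: "(('a::finite \<Rightarrow> real) \<Rightarrow> real) \<Rightarrow> bool" where
  "is_poly f \<longleftrightarrow> (\<exists>d. poly_fun d f)"

definition poly_update ::
  "(('v::finite \<Rightarrow> real) \<Rightarrow> ('r::finite \<Rightarrow> real) \<Rightarrow> ('v \<Rightarrow> real)) \<Rightarrow> bool" where
  "poly_update F \<longleftrightarrow>
     (\<forall>x. is_poly (\<lambda>w :: ('v + 'r) \<Rightarrow> real. F (\<lambda>y. w (Inl y)) (\<lambda>r. w (Inr r)) x))"

definition valid_cfg ::
  "('l::finite \<Rightarrow> ('l,'v::finite,'r::finite) lkind) \<Rightarrow> 'l \<Rightarrow> ('r \<Rightarrow> real measure) \<Rightarrow> bool" where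
  "valid_cfg K lout \<mu> \<longleftrightarrow>
     K lout = Terminal \<and> (\<forall>l. K l = Terminal \<longrightarrow> l = lout)
   \<and> (\<forall>r. prob_space (\<mu> r) \<and> sets (\<mu> r) = sets (borel :: real measure))
   \<and> (\<forall>l l' F. K l = Assign l' F \<longrightarrow> poly_update F)
   \<and> (\<forall>l \<phi> l1 l2. K l = Branch \<phi> l1 l2 \<longrightarrow>
          \<phi> \<in> sets (PiM (UNIV :: 'v set) (\<lambda>_. borel :: real measure)))
   \<and> (\<forall>l p l1 l2. K l = Probab p l1 l2 \<longrightarrow> 0 \<le> p \<and> p \<le> 1)
   \<and> (\<forall>l R l'. K l = Tick R l' \<longrightarrow> is_poly R)"

definition samp :: "('r::finite \<Rightarrow> real measure) \<Rightarrow> ('r \<Rightarrow> real) measure" where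
  "samp \<mu> = PiM UNIV \<mu>"

text \<open>Randomness used in one step: a fresh sampling valuation and a uniform coin in [0,1]
  (the coin of a probabilistic label with parameter p goes to the first successor iff c < p).\<close>
definition step_space :: "('r::finite \<Rightarrow> real measure) \<Rightarrow> (('r \<Rightarrow> real) \<times> real) measure" where
  "step_space \<mu> = samp \<mu> \<Otimes>\<^sub>M uniform_measure lborel {0..1::real}"

definition omega :: "('r::finite \<Rightarrow> real measure) \<Rightarrow> (nat \<Rightarrow> ('r \<Rightarrow> real) \<times> real) measure" where
  "omega \<mu> = PiM UNIV (\<lambda>_::nat. step_space \<mu>)"

text \<open>A scheduler maps a finite run (history of configurations) to the choice of the first
  (True) or second (False) successor of the nondeterministic label it ends in.\<close>
type_synonym ('l,'v) scheduler = "('l,'v) config list \<Rightarrow> bool"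

definition step ::
  "('l \<Rightarrow> ('l,'v,'r) lkind) \<Rightarrow> ('l,'v) scheduler \<Rightarrow> ('l,'v) config list
     \<Rightarrow> ('r \<Rightarrow> real) \<times> real \<Rightarrow> ('l,'v) config" where
  "step K \<sigma> hs uc =
     (let l = fst (last hs); v = snd (last hs); u = fst uc; c = snd uc in
      case K l of
        Assign l' F \<Rightarrow> (l', F v u)
      | Branch \<phi> l1 l2 \<Rightarrow> (if v \<in> \<phi> then l1 else l2, v)
      | Probab p l1 l2 \<Rightarrow> (if c < p then l1 else l2, v)
      | Nondet l1 l2 \<Rightarrow> (if \<sigma> hs then l1 else l2, v)
      | Tick R l' \<Rightarrow> (l', v)
      | Terminal \<Rightarrow> (l, v))"

primrec hist ::
  "('l \<Rightarrow> ('l,'v,'r) lkind) \<Rightarrow> ('l,'v) scheduler \<Rightarrow> 'l \<Rightarrow> ('v \<Rightarrow> real)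
     \<Rightarrow> (nat \<Rightarrow> ('r \<Rightarrow> real) \<times> real) \<Rightarrow> nat \<Rightarrow> ('l,'v) config list" where
  "hist K \<sigma> lin v \<omega> 0 = [(lin, v)]"
| "hist K \<sigma> lin v \<omega> (Suc n) = hist K \<sigma> lin v \<omega> n @ [step K \<sigma> (hist K \<sigma> lin v \<omega> n) (\<omega> n)]"

definition run ::
  "('l \<Rightarrow> ('l,'v,'r) lkind) \<Rightarrow> ('l,'v) scheduler \<Rightarrow> 'l \<Rightarrow> ('v \<Rightarrow> real)
     \<Rightarrow> (nat \<Rightarrow> ('r \<Rightarrow> real) \<times> real) \<Rightarrow> nat \<Rightarrow> ('l,'v) config" where
  "run K \<sigma> lin v \<omega> n = last (hist K \<sigma> lin v \<omega> n)"

text \<open>Schedulers for which the run is a random variable (measurable choices).\<close>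
definition admissible ::
  "('l \<Rightarrow> ('l,'v,'r::finite) lkind) \<Rightarrow> ('r \<Rightarrow> real measure) \<Rightarrow> 'l \<Rightarrow> ('v \<Rightarrow> real)
     \<Rightarrow> ('l,'v) scheduler \<Rightarrow> bool" where
  "admissible K \<mu> lin v \<sigma> \<longleftrightarrow>
     (\<forall>n. (\<lambda>\<omega>. \<sigma> (hist K \<sigma> lin v \<omega> n)) \<in> measurable (omega \<mu>) (count_space UNIV))"

definition cost :: "('l \<Rightarrow> ('l,'v,'r) lkind) \<Rightarrow> ('l,'v) config \<Rightarrow> real" where
  "cost K c = (case K (fst c) of Tick R l' \<Rightarrow> R (snd c) | _ \<Rightarrow> 0)"

definition total_cost ::
  "('l \<Rightarrow> ('l,'v,'r) lkind) \<Rightarrow> ('l,'v) scheduler \<Rightarrow> 'l \<Rightarrow> ('v \<Rightarrow> real)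
     \<Rightarrow> (nat \<Rightarrow> ('r \<Rightarrow> real) \<times> real) \<Rightarrow> real" where
  "total_cost K \<sigma> lin v \<omega> = (\<Sum>m. cost K (run K \<sigma> lin v \<omega> m))"

definition expected_cost ::
  "('l \<Rightarrow> ('l,'v,'r::finite) lkind) \<Rightarrow> ('r \<Rightarrow> real measure) \<Rightarrow> ('l,'v) scheduler
     \<Rightarrow> 'l \<Rightarrow> ('v \<Rightarrow> real) \<Rightarrow> real" where
  "expected_cost K \<mu> \<sigma> lin v = (\<integral>\<omega>. total_cost K \<sigma> lin v \<omega> \<partial>omega \<mu>)"

definition supval ::
  "('l \<Rightarrow> ('l,'v,'r::finite) lkind) \<Rightarrow> ('r \<Rightarrow> real measure) \<Rightarrow> 'l \<Rightarrow> ('v \<Rightarrow> real) \<Rightarrow> ereal" where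
  "supval K \<mu> lin v =
     (SUP \<sigma>\<in>{\<sigma>. admissible K \<mu> lin v \<sigma>}. ereal (expected_cost K \<mu> \<sigma> lin v))"

definition supp_real :: "real measure \<Rightarrow> real set" where
  "supp_real m = {x. \<forall>e>0. emeasure m {x - e<..<x + e} \<noteq> 0}"

definition sampled :: "('r \<Rightarrow> real measure) \<Rightarrow> ('r \<Rightarrow> real) set" where
  "sampled \<mu> = {u. \<forall>r. u r \<in> supp_real (\<mu> r)}"

inductive tstep :: "('l \<Rightarrow> ('l,'v,'r) lkind) \<Rightarrow> ('r \<Rightarrow> real measure)
    \<Rightarrow> ('l,'v) config \<Rightarrow> ('l,'v) config \<Rightarrow> bool" for K \<mu> where
  t_assign: "K l = Assign l' F \<Longrightarrow> u \<in> sampled \<mu> \<Longrightarrow> tstep K \<mu> (l, v) (l', F v u)"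
| t_branch: "K l = Branch \<phi> l1 l2 \<Longrightarrow> tstep K \<mu> (l, v) (if v \<in> \<phi> then l1 else l2, v)"
| t_prob1: "K l = Probab p l1 l2 \<Longrightarrow> 0 < p \<Longrightarrow> tstep K \<mu> (l, v) (l1, v)"
| t_prob2: "K l = Probab p l1 l2 \<Longrightarrow> p < 1 \<Longrightarrow> tstep K \<mu> (l, v) (l2, v)"
| t_nd1: "K l = Nondet l1 l2 \<Longrightarrow> tstep K \<mu> (l, v) (l1, v)"
| t_nd2: "K l = Nondet l1 l2 \<Longrightarrow> tstep K \<mu> (l, v) (l2, v)"
| t_tick: "K l = Tick R l' \<Longrightarrow> tstep K \<mu> (l, v) (l', v)"
| t_term: "K l = Terminal \<Longrightarrow> tstep K \<mu> (l, v) (l, v)"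

definition polyhedron_val :: "('v::finite \<Rightarrow> real) set \<Rightarrow> bool" where
  "polyhedron_val P \<longleftrightarrow>
     (\<exists>C :: (('v \<Rightarrow> real) \<times> real) set. finite C \<and>
        P = {v. \<forall>(a, b)\<in>C. (\<Sum>x\<in>UNIV. a x * v x) \<le> b})"

definition union_polyhedra :: "('v::finite \<Rightarrow> real) set \<Rightarrow> bool" where
  "union_polyhedra S \<longleftrightarrow>
     (\<exists>\<P>. finite \<P> \<and> (\<forall>P\<in>\<P>. polyhedron_val P) \<and> S = \<Union>\<P>)"

definition linear_invariant ::
  "('l \<Rightarrow> ('l,'v::finite,'r) lkind) \<Rightarrow> ('r \<Rightarrow> real measure) \<Rightarrow> 'l
     \<Rightarrow> ('l \<Rightarrow> ('v \<Rightarrow> real) set) \<Rightarrow> bool" where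
  "linear_invariant K \<mu> lin I \<longleftrightarrow>
     (\<forall>l. union_polyhedra (I l)) \<and>
     (\<forall>v\<in>I lin. \<forall>l w. (tstep K \<mu>)\<^sup>*\<^sup>* (lin, v) (l, w) \<longrightarrow> w \<in> I l)"

definition pre_exp ::
  "('l \<Rightarrow> ('l,'v,'r::finite) lkind) \<Rightarrow> ('r \<Rightarrow> real measure)
     \<Rightarrow> ('l \<Rightarrow> ('v \<Rightarrow> real) \<Rightarrow> real) \<Rightarrow> 'l \<Rightarrow> ('v \<Rightarrow> real) \<Rightarrow> real" where
  "pre_exp K \<mu> h l v =
     (case K l of
        Terminal \<Rightarrow> h l v
      | Assign l' F \<Rightarrow> (\<integral>u. h l' (F v u) \<partial>samp \<mu>)
      | Branch \<phi> l1 l2 \<Rightarrow> (if v \<in> \<phi> then h l1 v else h l2 v)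
      | Probab p l1 l2 \<Rightarrow> p * h l1 v + (1 - p) * h l2 v
      | Tick R l' \<Rightarrow> R v + h l' v
      | Nondet l1 l2 \<Rightarrow> max (h l1 v) (h l2 v))"

definition plcs ::
  "('l \<Rightarrow> ('l,'v::finite,'r::finite) lkind) \<Rightarrow> ('r \<Rightarrow> real measure) \<Rightarrow> ('l \<Rightarrow> ('v \<Rightarrow> real) set)
     \<Rightarrow> 'l \<Rightarrow> nat \<Rightarrow> ('l \<Rightarrow> ('v \<Rightarrow> real) \<Rightarrow> real) \<Rightarrow> bool" where
  "plcs K \<mu> I lout d h \<longleftrightarrow>
     (\<forall>l. poly_fun d (h l)) \<and>
     (\<forall>v. h lout v = 0) \<and>
     (\<forall>l v. l \<noteq> lout \<longrightarrow> v \<in> I l \<longrightarrow> pre_exp K \<mu> h l v \<ge> h l v)"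

definition concentration ::
  "('l \<Rightarrow> ('l,'v,'r::finite) lkind) \<Rightarrow> ('r \<Rightarrow> real measure) \<Rightarrow> 'l \<Rightarrow> 'l
     \<Rightarrow> ('l \<Rightarrow> ('v \<Rightarrow> real) set) \<Rightarrow> bool" where
  "concentration K \<mu> lin lout I \<longleftrightarrow>
     (\<forall>v\<in>I lin. \<exists>a b. a > 0 \<and> b > 0 \<and>
        (\<exists>N. \<forall>n\<ge>N. \<forall>\<sigma>. admissible K \<mu> lin v \<sigma> \<longrightarrow>
           measure (omega \<mu>)
             {\<omega>\<in>space (omega \<mu>). \<forall>m\<le>n. fst (run K \<sigma> lin v \<omega> m) \<noteq> lout}
           \<le> a * exp (- b * real n)))"

definition bounded_update ::
  "('l \<Rightarrow> ('l,'v,'r) lkind) \<Rightarrow> ('r \<Rightarrow> real measure) \<Rightarrow> ('l \<Rightarrow> ('v \<Rightarrow> real) set) \<Rightarrow> bool" where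
  "bounded_update K \<mu> I \<longleftrightarrow>
     (\<exists>M>0. \<forall>l l' F. K l = Assign l' F \<longrightarrow>
        (\<forall>v\<in>I l. \<forall>u\<in>sampled \<mu>. \<forall>x. \<bar>F v u x - v x\<bar> \<le> M))"

end

theory Submission
  imports Defs
begin


lemma poly_fun_meas:
  assumes "poly_fun d g" "\<And>z. (\<lambda>\<omega>. W \<omega> z) \<in> borel_measurable M"
  shows "(\<lambda>\<omega>. g (W \<omega>)) \<in> borel_measurable M"
proof -
  from assms(1) obtain E c where g: "\<And>w. g w = (\<Sum>e\<in>E. c e * (\<Prod>x\<in>UNIV. w x ^ e x))"
    unfolding poly_fun_def by blast
  show ?thesis unfolding g using assms(2) by measurable
qed

lemma is_poly_meas:
  assumes "is_poly g" "\<And>z. (\<lambda>\<omega>. W \<omega> z) \<in> borel_measurable M"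
  shows "(\<lambda>\<omega>. g (W \<omega>)) \<in> borel_measurable M"
  using assms poly_fun_meas unfolding is_poly_def by blast

lemma poly_fun_bound:
  assumes "poly_fun d (g :: ('a::finite \<Rightarrow> real) \<Rightarrow> real)"
  shows "\<exists>C\<ge>0. \<forall>B\<ge>1. \<forall>w. (\<forall>z. \<bar>w z\<bar> \<le> B) \<longrightarrow> \<bar>g w\<bar> \<le> C * B ^ d"
proof -
  from assms obtain E c where E: "finite E" "\<forall>e\<in>E. (\<Sum>x\<in>UNIV. e x) \<le> d"
    and g: "\<And>w. g w = (\<Sum>e\<in>E. c e * (\<Prod>x\<in>UNIV. w x ^ e x))"
    unfolding poly_fun_def by blast
  show ?thesis
  proof (intro exI[of _ "\<Sum>e\<in>E. \<bar>c e\<bar>"] conjI allI impI)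
    show "0 \<le> (\<Sum>e\<in>E. \<bar>c e\<bar>)" by (simp add: sum_nonneg)
    fix B :: real and w :: "'a \<Rightarrow> real" assume B: "1 \<le> B" and w: "\<forall>z. \<bar>w z\<bar> \<le> B"
    have "\<bar>g w\<bar> \<le> (\<Sum>e\<in>E. \<bar>c e * (\<Prod>x\<in>UNIV. w x ^ e x)\<bar>)"
      unfolding g by (rule sum_abs)
    also have "\<dots> \<le> (\<Sum>e\<in>E. \<bar>c e\<bar> * B ^ d)"
    proof (rule sum_mono)
      fix e assume e: "e \<in> E"
      have "\<bar>(\<Prod>x\<in>UNIV. w x ^ e x)\<bar> = (\<Prod>x\<in>UNIV. \<bar>w x\<bar> ^ e x)"
        by (simp add: abs_prod power_abs)
      also have "\<dots> \<le> (\<Prod>x\<in>UNIV. B ^ e x)"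
        by (rule prod_mono) (use w in \<open>auto intro: power_mono\<close>)
      also have "\<dots> = B ^ (\<Sum>x\<in>UNIV. e x)" by (simp add: power_sum)
      also have "\<dots> \<le> B ^ d" using E(2) e B by (auto intro: power_increasing)
      finally show "\<bar>c e * (\<Prod>x\<in>UNIV. w x ^ e x)\<bar> \<le> \<bar>c e\<bar> * B ^ d"
        by (simp add: abs_mult mult_left_mono)
    qed
    also have "\<dots> = (\<Sum>e\<in>E. \<bar>c e\<bar>) * B ^ d" by (simp add: sum_distrib_right)
    finally show "\<bar>g w\<bar> \<le> (\<Sum>e\<in>E. \<bar>c e\<bar>) * B ^ d" .
  qed
qed

lemma is_poly_bound:
  assumes "is_poly (g :: ('a::finite \<Rightarrow> real) \<Rightarrow> real)"
  shows "\<exists>C\<ge>0. \<exists>D. \<forall>B\<ge>1. \<forall>w. (\<forall>z. \<bar>w z\<bar> \<le> B) \<longrightarrow> \<bar>g w\<bar> \<le> C * B ^ D"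
  using assms poly_fun_bound unfolding is_poly_def by blast

lemma poly_fun_zero: "poly_fun 0 (\<lambda>_. 0)"
  unfolding poly_fun_def by (intro exI[of _ "{}"]) auto

lemma finite_bound_combine:
  fixes P :: "'l::finite \<Rightarrow> real \<Rightarrow> nat \<Rightarrow> bool"
  assumes "\<And>l. \<exists>C\<ge>0. \<exists>D. P l C D"
    and mono: "\<And>l C D C' D'. P l C D \<Longrightarrow> 0 \<le> C \<Longrightarrow> C \<le> C' \<Longrightarrow> D \<le> D' \<Longrightarrow> P l C' D'"
  shows "\<exists>C\<ge>0. \<exists>D. \<forall>l. P l C D"
proof -
  from assms(1) obtain C D where CD: "\<And>l. C l \<ge> 0 \<and> P l (C l) (D l)" by metis
  show ?thesis
  proof (intro exI[of _ "\<Sum>l\<in>UNIV. C l"] conjI exI[of _ "Max (range D)"] allI)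
    show "0 \<le> (\<Sum>l\<in>UNIV. C l)" using CD by (simp add: sum_nonneg)
    fix l
    have "C l \<le> (\<Sum>l\<in>UNIV. C l)" using CD by (intro member_le_sum) auto
    moreover have "D l \<le> Max (range D)" by simp
    ultimately show "P l (\<Sum>l\<in>UNIV. C l) (Max (range D))" using CD mono by blast
  qed
qed


definition sch :: "('l \<Rightarrow> ('l,'v,'r) lkind) \<Rightarrow> ('l \<Rightarrow> ('v \<Rightarrow> real) \<Rightarrow> real) \<Rightarrow> ('l,'v) scheduler" where
  "sch K h hs = (case K (fst (last hs)) of Nondet l1 l2 \<Rightarrow> h l2 (snd (last hs)) \<le> h l1 (snd (last hs)) | _ \<Rightarrow> True)"

definition nxt :: "('l \<Rightarrow> ('l,'v,'r) lkind) \<Rightarrow> ('l \<Rightarrow> ('v \<Rightarrow> real) \<Rightarrow> real) \<Rightarrow> ('l,'v) config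
   \<Rightarrow> ('r \<Rightarrow> real) \<times> real \<Rightarrow> ('l,'v) config" where
  "nxt K h s uc = (case K (fst s) of
        Assign l' F \<Rightarrow> (l', F (snd s) (fst uc))
      | Branch \<phi> l1 l2 \<Rightarrow> (if snd s \<in> \<phi> then l1 else l2, snd s)
      | Probab p l1 l2 \<Rightarrow> (if snd uc < p then l1 else l2, snd s)
      | Nondet l1 l2 \<Rightarrow> (if h l2 (snd s) \<le> h l1 (snd s) then l1 else l2, snd s)
      | Tick R l' \<Rightarrow> (l', snd s)
      | Terminal \<Rightarrow> s)"

lemma step_sch: "step K (sch K h) hs uc = nxt K h (last hs) uc"
  unfolding step_def sch_def nxt_def Let_def
  by (auto split: lkind.split prod.split)

primrec chain :: "('l \<Rightarrow> ('l,'v,'r) lkind) \<Rightarrow> ('l \<Rightarrow> ('v \<Rightarrow> real) \<Rightarrow> real) \<Rightarrow> ('l,'v) config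
   \<Rightarrow> (nat \<Rightarrow> ('r \<Rightarrow> real) \<times> real) \<Rightarrow> nat \<Rightarrow> ('l,'v) config" where
  "chain K h s \<omega> 0 = s"
| "chain K h s \<omega> (Suc n) = nxt K h (chain K h s \<omega> n) (\<omega> n)"

lemma last_hist: "last (hist K (sch K h) lin v \<omega> n) = chain K h (lin, v) \<omega> n"
  by (induction n) (simp_all add: step_sch)

lemma run_sch: "run K (sch K h) lin v \<omega> n = chain K h (lin, v) \<omega> n"
  unfolding run_def by (rule last_hist)

lemma sch_hist: "sch K h (hist K (sch K h) lin v \<omega> n) =
   (case K (fst (chain K h (lin, v) \<omega> n)) of Nondet l1 l2 \<Rightarrow>
       h l2 (snd (chain K h (lin, v) \<omega> n)) \<le> h l1 (snd (chain K h (lin, v) \<omega> n)) | _ \<Rightarrow> True)"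
  unfolding sch_def last_hist ..

lemma chain_shift: "chain K h s (case_nat x \<omega>) (Suc n) = chain K h (nxt K h s x) \<omega> n"
  by (induction n) simp_all

lemma nxt_tstep:
  assumes "fst uc \<in> sampled \<mu>" "0 \<le> snd uc" "snd uc < 1"
  shows "tstep K \<mu> s (nxt K h s uc)"
proof -
  obtain l w where s: "s = (l, w)" by (cases s)
  obtain u c where uc: "uc = (u, c)" by (cases uc)
  show ?thesis
  proof (cases "K l")
    case (Assign l' F) then show ?thesis using assms by (auto simp: s uc nxt_def intro: tstep.intros)
  next
    case (Branch \<phi> l1 l2) then show ?thesis
      using tstep.t_branch[of K l \<phi> l1 l2 \<mu> w] by (simp add: s uc nxt_def)
  next
    case (Probab p l1 l2) then show ?thesis using assms
      by (auto simp: s uc nxt_def intro: tstep.t_prob1 tstep.t_prob2)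
  next
    case (Nondet l1 l2) then show ?thesis by (auto simp: s uc nxt_def intro: tstep.intros)
  next
    case (Tick R l') then show ?thesis by (auto simp: s uc nxt_def intro: tstep.intros)
  next
    case Terminal then show ?thesis by (auto simp: s uc nxt_def intro: tstep.intros)
  qed
qed

definition good1 :: "('r \<Rightarrow> real measure) \<Rightarrow> ('r \<Rightarrow> real) \<times> real \<Rightarrow> bool" where
  "good1 \<mu> uc \<longleftrightarrow> fst uc \<in> sampled \<mu> \<and> 0 \<le> snd uc \<and> snd uc < 1"

lemma chain_reach:
  assumes "\<forall>n. good1 \<mu> (\<omega> n)"
  shows "(tstep K \<mu>)\<^sup>*\<^sup>* s (chain K h s \<omega> n)"
proof (induction n)
  case (Suc n)
  have "tstep K \<mu> (chain K h s \<omega> n) (chain K h s \<omega> (Suc n))"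
    using assms[rule_format, of n] by (simp add: good1_def nxt_tstep)
  with Suc show ?case by simp
qed simp

lemma nxt_lout: "K l = Terminal \<Longrightarrow> nxt K h (l, w) uc = (l, w)"
  by (simp add: nxt_def)

lemma chain_lout:
  assumes "K lout = Terminal" "fst (chain K h s \<omega> n) = lout" "n \<le> m"
  shows "chain K h s \<omega> m = chain K h s \<omega> n"
  using assms(3)
proof (induction m)
  case (Suc m)
  show ?case
  proof (cases "n = Suc m")
    case False
    with Suc have "chain K h s \<omega> m = chain K h s \<omega> n" by simp
    then show ?thesis using assms(1,2) by (cases "chain K h s \<omega> n") (simp add: nxt_lout)
  qed simp
qed simp


locale setting =
  fixes K :: "'l::finite \<Rightarrow> ('l, 'v::finite, 'r::finite) lkind"
    and \<mu> :: "'r \<Rightarrow> real measure"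
    and lin lout :: 'l
    and I :: "'l \<Rightarrow> ('v \<Rightarrow> real) set"
    and h :: "'l \<Rightarrow> ('v \<Rightarrow> real) \<Rightarrow> real"
    and d :: nat
    and v :: "'v \<Rightarrow> real"
  assumes valid: "valid_cfg K lout \<mu>"
    and inv: "linear_invariant K \<mu> lin I"
    and plcs: "plcs K \<mu> I lout d h"
    and conc: "concentration K \<mu> lin lout I"
    and bu: "bounded_update K \<mu> I"
    and vI: "v \<in> I lin"
begin

lemma Kout: "K lout = Terminal" using valid unfolding valid_cfg_def by blast
lemma mu_prob: "prob_space (\<mu> r)" using valid unfolding valid_cfg_def by blast
lemma mu_sets: "sets (\<mu> r) = sets borel" using valid unfolding valid_cfg_def by blast
lemma assign_poly: "K l = Assign l' F \<Longrightarrow> poly_update F" using valid unfolding valid_cfg_def by blast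
lemma branch_sets: "K l = Branch \<phi> l1 l2 \<Longrightarrow> \<phi> \<in> sets (PiM (UNIV :: 'v set) (\<lambda>_. borel :: real measure))"
  using valid unfolding valid_cfg_def by blast
lemma probab_p: "K l = Probab p l1 l2 \<Longrightarrow> 0 \<le> p \<and> p \<le> 1" using valid unfolding valid_cfg_def by blast
lemma tick_poly: "K l = Tick R l' \<Longrightarrow> is_poly R" using valid unfolding valid_cfg_def by blast
lemma h_poly: "poly_fun d (h l)" using plcs unfolding plcs_def by blast
lemma h_out: "h lout w = 0" using plcs unfolding plcs_def by blast
lemma h_pre: "l \<noteq> lout \<Longrightarrow> w \<in> I l \<Longrightarrow> pre_exp K \<mu> h l w \<ge> h l w" using plcs unfolding plcs_def by blast

lemma samp_prob: "prob_space (samp \<mu>)"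
  unfolding samp_def by (rule prob_space_PiM) (rule mu_prob)

lemma unif_prob: "prob_space (uniform_measure lborel {0..1::real})"
  by (rule prob_space_uniform_measure) auto

lemma step_prob: "prob_space (step_space \<mu>)"
  unfolding step_space_def
  by (intro prob_space_pair samp_prob unif_prob)

lemma omega_prob: "prob_space (omega \<mu>)"
  unfolding omega_def by (rule prob_space_PiM) (rule step_prob)

lemma step_meas_u: "(\<lambda>uc. fst uc r) \<in> borel_measurable (step_space \<mu>)"
proof -
  have "(\<lambda>u. u r) \<in> measurable (samp \<mu>) (\<mu> r)" unfolding samp_def by simp
  then have "(\<lambda>u. u r) \<in> borel_measurable (samp \<mu>)"
    by (simp add: measurable_cong_sets[OF refl mu_sets])
  then show ?thesis unfolding step_space_def by measurable
qed

lemma step_meas_c: "(\<lambda>uc. snd uc) \<in> borel_measurable (step_space \<mu>)"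
proof -
  have "(\<lambda>c. c) \<in> borel_measurable (uniform_measure lborel {0..1::real})"
    by (simp add: measurable_cong_sets[OF refl sets_uniform_measure])
  then show ?thesis unfolding step_space_def by measurable
qed

definition cfgmeas :: "'a measure \<Rightarrow> ('a \<Rightarrow> ('l,'v) config) \<Rightarrow> bool" where
  "cfgmeas M f \<longleftrightarrow> (\<lambda>\<omega>. fst (f \<omega>)) \<in> measurable M (count_space UNIV) \<and>
      (\<forall>x. (\<lambda>\<omega>. snd (f \<omega>) x) \<in> borel_measurable M)"

lemma cfgmeas_val: "cfgmeas M f \<Longrightarrow> (\<lambda>\<omega>. snd (f \<omega>)) \<in> measurable M (PiM UNIV (\<lambda>_::'v. borel :: real measure))"
  unfolding cfgmeas_def by (intro measurable_PiM_single') (simp_all add: Pi_iff)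

lemma cfgmeas_fun:
  assumes "cfgmeas M f" "\<And>l. is_poly (G l)"
  shows "(\<lambda>\<omega>. G (fst (f \<omega>)) (snd (f \<omega>))) \<in> borel_measurable M"
proof (rule measurable_compose_countable'[where f="\<lambda>l \<omega>. G l (snd (f \<omega>))" and I=UNIV])
  show "(\<lambda>\<omega>. G l (snd (f \<omega>))) \<in> borel_measurable M" for l
    using is_poly_meas[of "G l" "\<lambda>\<omega>. snd (f \<omega>)" M] assms by (simp add: cfgmeas_def)
next
  show "(\<lambda>\<omega>. fst (f \<omega>)) \<in> measurable M (count_space UNIV)" using assms(1) by (simp add: cfgmeas_def)
next
  show "countable (UNIV :: 'l set)" by (rule countable_finite) simp
qed

lemma h_is_poly: "is_poly (h l)" using h_poly unfolding is_poly_def by blast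

definition costf :: "'l \<Rightarrow> ('v \<Rightarrow> real) \<Rightarrow> real" where
  "costf l w = cost K (l, w)"

lemma is_poly_zero: "is_poly (\<lambda>_. 0)"
  unfolding is_poly_def using poly_fun_zero by blast

lemma costf_eq: "costf l = (case K l of Tick R l' \<Rightarrow> R | _ \<Rightarrow> (\<lambda>_. 0))"
  by (rule ext) (simp add: costf_def cost_def split: lkind.split)

lemma costf_poly: "is_poly (costf l)"
  unfolding costf_eq by (cases "K l") (simp_all add: is_poly_zero tick_poly)

lemma cost_meas: "cfgmeas M f \<Longrightarrow> (\<lambda>\<omega>. cost K (f \<omega>)) \<in> borel_measurable M"
  using cfgmeas_fun[of M f costf] costf_poly by (simp add: costf_def)

lemma h_meas: "cfgmeas M f \<Longrightarrow> (\<lambda>\<omega>. h (fst (f \<omega>)) (snd (f \<omega>))) \<in> borel_measurable M"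
  using cfgmeas_fun[of M f h] h_is_poly by simp

lemma const_count: "(\<lambda>_. c) \<in> measurable M (count_space UNIV)" by simp

lemma nxt_meas:
  assumes f: "cfgmeas M f" and g: "g \<in> measurable M (step_space \<mu>)"
  shows "cfgmeas M (\<lambda>\<omega>. nxt K h (f \<omega>) (g \<omega>))"
proof -
  have fl: "(\<lambda>\<omega>. fst (f \<omega>)) \<in> measurable M (count_space UNIV)" and
    fv: "\<And>x. (\<lambda>\<omega>. snd (f \<omega>) x) \<in> borel_measurable M" using f by (auto simp: cfgmeas_def)
  have fV: "(\<lambda>\<omega>. snd (f \<omega>)) \<in> measurable M (PiM UNIV (\<lambda>_::'v. borel :: real measure))"
    using f by (rule cfgmeas_val)
  have gu: "\<And>r. (\<lambda>\<omega>. fst (g \<omega>) r) \<in> borel_measurable M"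
    using measurable_compose[OF g step_meas_u] by simp
  have gc: "(\<lambda>\<omega>. snd (g \<omega>)) \<in> borel_measurable M"
    using measurable_compose[OF g step_meas_c] by simp
  have hm: "\<And>l. (\<lambda>\<omega>. h l (snd (f \<omega>))) \<in> borel_measurable M"
    using is_poly_meas[OF h_is_poly, of "\<lambda>\<omega>. snd (f \<omega>)" M] fv by simp
  have lab: "(\<lambda>\<omega>. fst (nxt K h (l, snd (f \<omega>)) (g \<omega>))) \<in> measurable M (count_space UNIV)" for l
  proof (cases "K l")
    case (Branch \<phi> l1 l2)
    have "{\<omega> \<in> space M. snd (f \<omega>) \<in> \<phi>} \<in> sets M"
    proof -
      have "{\<omega> \<in> space M. snd (f \<omega>) \<in> \<phi>} = (\<lambda>\<omega>. snd (f \<omega>)) -` \<phi> \<inter> space M" by blast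
      then show ?thesis using measurable_sets[OF fV branch_sets[OF Branch]] by simp
    qed
    then have "(\<lambda>\<omega>. if \<omega> \<in> {\<omega> \<in> space M. snd (f \<omega>) \<in> \<phi>} then l1 else l2) \<in> measurable M (count_space UNIV)"
      by (intro measurable_If_set) auto
    moreover have "\<And>\<omega>. \<omega> \<in> space M \<Longrightarrow> (if \<omega> \<in> {\<omega> \<in> space M. snd (f \<omega>) \<in> \<phi>} then l1 else l2) =
        fst (nxt K h (l, snd (f \<omega>)) (g \<omega>))" using Branch by (simp add: nxt_def)
    ultimately show ?thesis by (rule measurable_cong[THEN iffD1, rotated])
  next
    case (Probab p l1 l2)
    have "(\<lambda>\<omega>. if snd (g \<omega>) < p then l1 else l2) \<in> measurable M (count_space UNIV)"
      using gc by measurable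
    then show ?thesis using Probab by (simp add: nxt_def)
  next
    case (Nondet l1 l2)
    have "(\<lambda>\<omega>. if h l2 (snd (f \<omega>)) \<le> h l1 (snd (f \<omega>)) then l1 else l2) \<in> measurable M (count_space UNIV)"
      using hm by measurable
    then show ?thesis using Nondet by (simp add: nxt_def)
  qed (simp_all add: nxt_def)
  have val: "(\<lambda>\<omega>. snd (nxt K h (l, snd (f \<omega>)) (g \<omega>)) x) \<in> borel_measurable M" for l x
  proof (cases "K l")
    case (Assign l' F)
    have pF: "is_poly (\<lambda>w :: ('v + 'r) \<Rightarrow> real. F (\<lambda>y. w (Inl y)) (\<lambda>r. w (Inr r)) x)"
      using assign_poly[OF Assign] unfolding poly_update_def by blast
    have "(\<lambda>\<omega>. (\<lambda>w :: ('v + 'r) \<Rightarrow> real. F (\<lambda>y. w (Inl y)) (\<lambda>r. w (Inr r)) x)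
              (\<lambda>z. case z of Inl y \<Rightarrow> snd (f \<omega>) y | Inr r \<Rightarrow> fst (g \<omega>) r)) \<in> borel_measurable M"
    proof (rule is_poly_meas[OF pF])
      fix z :: "'v + 'r" show "(\<lambda>\<omega>. case z of Inl y \<Rightarrow> snd (f \<omega>) y | Inr r \<Rightarrow> fst (g \<omega>) r) \<in> borel_measurable M"
      proof (cases z)
        case (Inl y) then show ?thesis using fv[of y] by simp
      next
        case (Inr r) then show ?thesis using gu[of r] by simp
      qed
    qed
    then show ?thesis using Assign by (simp add: nxt_def)
  qed (simp_all add: nxt_def fv)
  show ?thesis unfolding cfgmeas_def
  proof (intro conjI allI)
    show "(\<lambda>\<omega>. fst (nxt K h (f \<omega>) (g \<omega>))) \<in> measurable M (count_space UNIV)"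
      using measurable_compose_countable'[where f="\<lambda>l \<omega>. fst (nxt K h (l, snd (f \<omega>)) (g \<omega>))", OF lab fl]
      by simp
    show "(\<lambda>\<omega>. snd (nxt K h (f \<omega>) (g \<omega>)) x) \<in> borel_measurable M" for x
      using measurable_compose_countable'[where f="\<lambda>l \<omega>. snd (nxt K h (l, snd (f \<omega>)) (g \<omega>)) x", OF val fl]
      by simp
  qed
qed

lemma chain_meas:
  assumes f: "cfgmeas M f" and g: "\<And>n. (\<lambda>\<omega>. G \<omega> n) \<in> measurable M (step_space \<mu>)"
  shows "cfgmeas M (\<lambda>\<omega>. chain K h (f \<omega>) (G \<omega>) n)"
proof (induction n)
  case (Suc n) then show ?case using nxt_meas[OF Suc g] by simp
qed (simp add: f)

lemma const_cfgmeas: "cfgmeas M (\<lambda>_. s)" by (simp add: cfgmeas_def)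

lemma chain_meas_omega: "cfgmeas (omega \<mu>) (\<lambda>\<omega>. chain K h s \<omega> n)"
  by (rule chain_meas[OF const_cfgmeas]) (simp add: omega_def)

end


lemma supp_AE:
  assumes sets_m: "sets m = sets (borel :: real measure)"
  shows "AE x in m. x \<in> supp_real m"
proof -
  define Q where "Q = {(a, b). a \<in> \<rat> \<and> b \<in> \<rat> \<and> emeasure m {a<..<b} = 0}"
  have cQ: "countable Q"
  proof (rule countable_subset)
    show "Q \<subseteq> \<rat> \<times> \<rat>" unfolding Q_def by auto
    show "countable (\<rat> \<times> (\<rat> :: real set))" by (intro countable_SIGMA countable_rat)
  qed
  have "AE x in m. \<forall>q\<in>Q. x \<notin> {fst q<..<snd q}"
  proof (rule AE_ball_countable'[OF _ cQ])
    fix q assume "q \<in> Q"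
    then have q: "emeasure m {fst q<..<snd q} = 0" unfolding Q_def by auto
    have "{fst q<..<snd q} \<in> sets m" using sets_m by simp
    then have "{fst q<..<snd q} \<in> null_sets m" using q by (simp add: null_sets_def)
    then show "AE x in m. x \<notin> {fst q<..<snd q}" by (rule AE_not_in)
  qed
  then show ?thesis
  proof (rule AE_mp, intro AE_I2 impI)
    fix x assume H: "\<forall>q\<in>Q. x \<notin> {fst q<..<snd q}"
    show "x \<in> supp_real m" unfolding supp_real_def
    proof (intro CollectI allI impI notI)
      fix e :: real assume e: "e > 0" and z: "emeasure m {x - e<..<x + e} = 0"
      obtain a where a: "a \<in> \<rat>" "x - e < a" "a < x" using Rats_dense_in_real[of "x - e" x] e by auto
      obtain b where b: "b \<in> \<rat>" "x < b" "b < x + e" using Rats_dense_in_real[of x "x + e"] e by auto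
      have "emeasure m {a<..<b} \<le> emeasure m {x - e<..<x + e}"
        using a b sets_m by (intro emeasure_mono) auto
      then have "emeasure m {a<..<b} = 0" using z by simp
      then have "(a, b) \<in> Q" using a b unfolding Q_def by auto
      then have "x \<notin> {a<..<b}" using H by fastforce
      then show False using a b by simp
    qed
  qed
qed

context setting begin

lemma mu_supp: "AE u in \<mu> r. u \<in> supp_real (\<mu> r)"
  by (rule supp_AE) (rule mu_sets)

lemma t1: "AE u in PiM UNIV \<mu>. u r \<in> supp_real (\<mu> r)"
  apply (rule AE_PiM_component[where M=\<mu> and I=UNIV and i=r])
  apply (simp add: mu_prob)
  apply simp
  using mu_supp[of r] apply assumption
  done

lemma sampled_AE: "AE u in samp \<mu>. u \<in> sampled \<mu>"
proof -
  have "AE u in samp \<mu>. \<forall>r. u r \<in> supp_real (\<mu> r)"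
  proof (subst AE_all_countable, intro allI)
    fix r
    show "AE u in samp \<mu>. u r \<in> supp_real (\<mu> r)"
      unfolding samp_def by (rule t1)
  qed
  then show ?thesis unfolding sampled_def by simp
qed

lemma good1_AE: "AE uc in step_space \<mu>. good1 \<mu> uc"
proof -
  interpret U: prob_space "uniform_measure lborel {0..1::real}" by (rule unif_prob)
  interpret S: prob_space "samp \<mu>" by (rule samp_prob)
  interpret P: pair_sigma_finite "samp \<mu>" "uniform_measure lborel {0..1::real}" ..
  have A1: "AE uc in step_space \<mu>. fst uc \<in> sampled \<mu>"
  proof (rule AE_distrD[of fst "step_space \<mu>" "samp \<mu>"])
    show "fst \<in> measurable (step_space \<mu>) (samp \<mu>)" unfolding step_space_def by simp
    show "AE x in distr (step_space \<mu>) (samp \<mu>) fst. x \<in> sampled \<mu>"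
      unfolding step_space_def U.distr_pair_fst by (rule sampled_AE)
  qed
  have c1: "AE c in uniform_measure lborel {0..1::real}. 0 \<le> c \<and> c < 1"
  proof (subst AE_uniform_measure)
    show "AE x in lborel. x \<in> {0..1::real} \<longrightarrow> 0 \<le> x \<and> x < 1"
      using AE_lborel_singleton[of "1::real"] by eventually_elim auto
  qed auto
  have A2: "AE uc in step_space \<mu>. 0 \<le> snd uc \<and> snd uc < 1"
    unfolding step_space_def
  proof (rule P.AE_pair_measure)
    have sm[measurable]: "snd \<in> borel_measurable (samp \<mu> \<Otimes>\<^sub>M uniform_measure lborel {0..1::real})"
      using step_meas_c unfolding step_space_def by simp
    show "{x \<in> space (samp \<mu> \<Otimes>\<^sub>M uniform_measure lborel {0..1::real}). 0 \<le> snd x \<and> snd x < 1}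
       \<in> sets (samp \<mu> \<Otimes>\<^sub>M uniform_measure lborel {0..1::real})" by measurable
    show "AE x in samp \<mu>. AE y in uniform_measure lborel {0..1::real}. 0 \<le> snd (x, y) \<and> snd (x, y) < 1"
      using c1 by simp
  qed
  show ?thesis using A1 A2 unfolding good1_def by eventually_elim auto
qed

lemma good_AE: "AE \<omega> in omega \<mu>. \<forall>n. good1 \<mu> (\<omega> n)"
  unfolding omega_def AE_all_countable
  by (intro allI AE_PiM_component step_prob good1_AE) auto

end


context setting begin

definition reach :: "('l,'v) config \<Rightarrow> bool" where
  "reach s \<longleftrightarrow> (tstep K \<mu>)\<^sup>*\<^sup>* (lin, v) s"

lemma reach_I: "reach s \<Longrightarrow> snd s \<in> I (fst s)"
proof -
  have H: "\<forall>v\<in>I lin. \<forall>l w. (tstep K \<mu>)\<^sup>*\<^sup>* (lin, v) (l, w) \<longrightarrow> w \<in> I l"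
    using inv unfolding linear_invariant_def by (rule conjunct2)
  assume "reach s"
  then have "(tstep K \<mu>)\<^sup>*\<^sup>* (lin, v) (fst s, snd s)" unfolding reach_def by simp
  then show ?thesis using H vI by blast
qed

lemma reach_init: "reach (lin, v)" unfolding reach_def by simp

lemma reach_chain: "reach s \<Longrightarrow> \<forall>n. good1 \<mu> (\<omega> n) \<Longrightarrow> reach (chain K h s \<omega> n)"
  unfolding reach_def using chain_reach[of \<mu> \<omega> K s h n] by simp

lemma reach_nxt: "reach s \<Longrightarrow> good1 \<mu> uc \<Longrightarrow> reach (nxt K h s uc)"
  unfolding reach_def good1_def using nxt_tstep[of uc \<mu> K s h] by (simp add: rtranclp.rtrancl_into_rtrancl)

definition Mb :: real where
  "Mb = (SOME M. M > 0 \<and> (\<forall>l l' F. K l = Assign l' F \<longrightarrow>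
        (\<forall>v\<in>I l. \<forall>u\<in>sampled \<mu>. \<forall>x. \<bar>F v u x - v x\<bar> \<le> M)))"

lemma Mb: "Mb > 0 \<and> (\<forall>l l' F. K l = Assign l' F \<longrightarrow>
        (\<forall>v\<in>I l. \<forall>u\<in>sampled \<mu>. \<forall>x. \<bar>F v u x - v x\<bar> \<le> Mb))"
  unfolding Mb_def using bu unfolding bounded_update_def by (rule someI_ex)

lemma Mb_pos: "Mb > 0" using Mb by blast

lemma nxt_step_bound:
  assumes "reach s" "good1 \<mu> uc"
  shows "\<bar>snd (nxt K h s uc) x - snd s x\<bar> \<le> Mb"
proof -
  obtain l w where s: "s = (l, w)" by (cases s)
  have wI: "w \<in> I l" using reach_I[OF assms(1)] s by simp
  have us: "fst uc \<in> sampled \<mu>" using assms(2) by (simp add: good1_def)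
  show ?thesis
  proof (cases "K l")
    case (Assign l' F)
    then show ?thesis using Mb wI us by (simp add: s nxt_def)
  qed (use Mb_pos in \<open>simp_all add: s nxt_def\<close>)
qed

definition nrm :: "('l,'v) config \<Rightarrow> real" where
  "nrm s = 1 + (\<Sum>x\<in>UNIV. \<bar>snd s x\<bar>)"

lemma nrm_ge1: "nrm s \<ge> 1" unfolding nrm_def by (simp add: sum_nonneg)

lemma nrm_comp: "\<bar>snd s x\<bar> \<le> nrm s"
proof -
  have "\<bar>snd s x\<bar> \<le> (\<Sum>x\<in>UNIV. \<bar>snd s x\<bar>)" by (rule member_le_sum) auto
  then show ?thesis unfolding nrm_def by simp
qed

lemma chain_bound:
  assumes "reach s" "\<forall>n. good1 \<mu> (\<omega> n)"
  shows "\<bar>snd (chain K h s \<omega> n) x\<bar> \<le> nrm s + real n * Mb"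
proof (induction n)
  case 0 then show ?case using nrm_comp[of s x] by simp
next
  case (Suc n)
  have "\<bar>snd (chain K h s \<omega> (Suc n)) x - snd (chain K h s \<omega> n) x\<bar> \<le> Mb"
    using nxt_step_bound[OF reach_chain[OF assms] assms(2)[rule_format, of n]] by simp
  then show ?case using Suc by (simp add: algebra_simps)
qed

lemma uniform_poly_bound:
  "\<exists>C\<ge>0. \<exists>D. \<forall>l. \<forall>B\<ge>1. \<forall>w. (\<forall>z. \<bar>w z\<bar> \<le> B) \<longrightarrow> \<bar>h l w\<bar> \<le> C * B ^ D \<and> \<bar>cost K (l, w)\<bar> \<le> C * B ^ D"
proof (rule finite_bound_combine)
  fix l
  obtain C1 where C1: "C1 \<ge> 0" "\<forall>B\<ge>1. \<forall>w. (\<forall>z. \<bar>w z\<bar> \<le> B) \<longrightarrow> \<bar>h l w\<bar> \<le> C1 * B ^ d"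
    using poly_fun_bound[OF h_poly[of l]] by blast
  obtain C2 D2 where C2: "C2 \<ge> 0" "\<forall>B\<ge>1. \<forall>w. (\<forall>z. \<bar>w z\<bar> \<le> B) \<longrightarrow> \<bar>costf l w\<bar> \<le> C2 * B ^ D2"
    using is_poly_bound[OF costf_poly[of l]] by blast
  show "\<exists>C\<ge>0. \<exists>D. \<forall>B\<ge>1. \<forall>w. (\<forall>z. \<bar>w z\<bar> \<le> B) \<longrightarrow> \<bar>h l w\<bar> \<le> C * B ^ D \<and> \<bar>cost K (l, w)\<bar> \<le> C * B ^ D"
  proof (intro exI[of _ "C1 + C2"] conjI exI[of _ "max d D2"] allI impI)
    show "0 \<le> C1 + C2" using C1 C2 by simp
    fix B :: real and w :: "'v \<Rightarrow> real" assume B: "1 \<le> B" and w: "\<forall>z. \<bar>w z\<bar> \<le> B"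
    have p1: "B ^ d \<le> B ^ max d D2" using B by (intro power_increasing) auto
    have p2: "B ^ D2 \<le> B ^ max d D2" using B by (intro power_increasing) auto
    have "\<bar>h l w\<bar> \<le> C1 * B ^ d" using C1 B w by blast
    also have "\<dots> \<le> (C1 + C2) * B ^ max d D2"
      using p1 C1 C2 B by (intro mult_mono) auto
    finally show "\<bar>h l w\<bar> \<le> (C1 + C2) * B ^ max d D2" .
    have "\<bar>cost K (l, w)\<bar> \<le> C2 * B ^ D2" using C2 B w by (simp add: costf_def)
    also have "\<dots> \<le> (C1 + C2) * B ^ max d D2"
      using p2 C1 C2 B by (intro mult_mono) auto
    finally show "\<bar>cost K (l, w)\<bar> \<le> (C1 + C2) * B ^ max d D2" .
  qed
next
  fix l C D C' D' assume H: "\<forall>B\<ge>1. \<forall>w. (\<forall>z. \<bar>w z\<bar> \<le> B) \<longrightarrow> \<bar>h l w\<bar> \<le> C * B ^ D \<and> \<bar>cost K (l, w)\<bar> \<le> C * B ^ D"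
    and C0: "0 \<le> C" and CC: "C \<le> C'" and DD: "D \<le> D'"
  show "\<forall>B\<ge>1. \<forall>w. (\<forall>z. \<bar>w z\<bar> \<le> B) \<longrightarrow> \<bar>h l w\<bar> \<le> C' * B ^ D' \<and> \<bar>cost K (l, w)\<bar> \<le> C' * B ^ D'"
  proof (intro allI impI)
    fix B :: real and w :: "'v \<Rightarrow> real" assume B: "1 \<le> B" and w: "\<forall>z. \<bar>w z\<bar> \<le> B"
    have pp: "B ^ D \<le> B ^ D'" by (rule power_increasing[OF DD B])
    have "C * B ^ D \<le> C' * B ^ D'"
      using B CC C0 pp by (intro mult_mono) auto
    moreover have "\<bar>h l w\<bar> \<le> C * B ^ D \<and> \<bar>cost K (l, w)\<bar> \<le> C * B ^ D"
      using H B w by blast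
    ultimately show "\<bar>h l w\<bar> \<le> C' * B ^ D' \<and> \<bar>cost K (l, w)\<bar> \<le> C' * B ^ D'"
      by linarith
  qed
qed

definition Cb :: real where
  "Cb = (SOME C. C \<ge> 0 \<and> (\<exists>D. \<forall>l. \<forall>B\<ge>1. \<forall>w. (\<forall>z. \<bar>w z\<bar> \<le> B) \<longrightarrow> \<bar>h l w\<bar> \<le> C * B ^ D \<and> \<bar>cost K (l, w)\<bar> \<le> C * B ^ D))"

definition Db :: nat where
  "Db = (SOME D. \<forall>l. \<forall>B\<ge>1. \<forall>w. (\<forall>z. \<bar>w z\<bar> \<le> B) \<longrightarrow> \<bar>h l w\<bar> \<le> Cb * B ^ D \<and> \<bar>cost K (l, w)\<bar> \<le> Cb * B ^ D)"

lemma CbDb: "Cb \<ge> 0" "\<forall>l. \<forall>B\<ge>1. \<forall>w. (\<forall>z. \<bar>w z\<bar> \<le> B) \<longrightarrow> \<bar>h l w\<bar> \<le> Cb * B ^ Db \<and> \<bar>cost K (l, w)\<bar> \<le> Cb * B ^ Db"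
proof -
  have 1: "Cb \<ge> 0 \<and> (\<exists>D. \<forall>l. \<forall>B\<ge>1. \<forall>w. (\<forall>z. \<bar>w z\<bar> \<le> B) \<longrightarrow> \<bar>h l w\<bar> \<le> Cb * B ^ D \<and> \<bar>cost K (l, w)\<bar> \<le> Cb * B ^ D)"
    unfolding Cb_def using uniform_poly_bound by (rule someI_ex)
  then show "Cb \<ge> 0" by (rule conjunct1)
  from 1 obtain D where D: "\<forall>l. \<forall>B\<ge>1. \<forall>w. (\<forall>z. \<bar>w z\<bar> \<le> B) \<longrightarrow> \<bar>h l w\<bar> \<le> Cb * B ^ D \<and> \<bar>cost K (l, w)\<bar> \<le> Cb * B ^ D"
    by (elim conjE exE)
  show "\<forall>l. \<forall>B\<ge>1. \<forall>w. (\<forall>z. \<bar>w z\<bar> \<le> B) \<longrightarrow> \<bar>h l w\<bar> \<le> Cb * B ^ Db \<and> \<bar>cost K (l, w)\<bar> \<le> Cb * B ^ Db"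
    unfolding Db_def using D by (rule someI)
qed

lemma cfg_bound:
  assumes "1 \<le> B" "\<And>z. \<bar>snd s z\<bar> \<le> B"
  shows "\<bar>h (fst s) (snd s)\<bar> \<le> Cb * B ^ Db" "\<bar>cost K s\<bar> \<le> Cb * B ^ Db"
  using CbDb(2)[rule_format, of B "snd s" "fst s"] assms by auto

end


context setting begin

definition hc :: "('l,'v) config \<Rightarrow> real" where
  "hc s = h (fst s) (snd s)"

definition Y :: "nat \<Rightarrow> ('l,'v) config \<Rightarrow> (nat \<Rightarrow> ('r \<Rightarrow> real) \<times> real) \<Rightarrow> real" where
  "Y n s \<omega> = hc (chain K h s \<omega> n) + (\<Sum>m<n. cost K (chain K h s \<omega> m))"

lemma Y_meas: "Y n s \<in> borel_measurable (omega \<mu>)"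
proof -
  have 1: "(\<lambda>\<omega>. hc (chain K h s \<omega> n)) \<in> borel_measurable (omega \<mu>)"
    unfolding hc_def by (rule h_meas[OF chain_meas_omega])
  have 2: "(\<lambda>\<omega>. cost K (chain K h s \<omega> m)) \<in> borel_measurable (omega \<mu>)" for m
    by (rule cost_meas[OF chain_meas_omega])
  have 3: "(\<lambda>\<omega>. \<Sum>m<n. cost K (chain K h s \<omega> m)) \<in> borel_measurable (omega \<mu>)"
    by (rule borel_measurable_sum) (rule 2)
  show ?thesis unfolding Y_def[abs_def] using 1 3 by (rule borel_measurable_add)
qed

lemma chain_cfg_bound:
  assumes "reach s" "\<forall>n. good1 \<mu> (\<omega> n)" "m \<le> n"
  shows "\<bar>hc (chain K h s \<omega> m)\<bar> \<le> Cb * (nrm s + real n * Mb) ^ Db"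
    and "\<bar>cost K (chain K h s \<omega> m)\<bar> \<le> Cb * (nrm s + real n * Mb) ^ Db"
proof -
  have "0 \<le> real n * Mb" using Mb_pos by simp
  then have B1: "1 \<le> nrm s + real n * Mb" using nrm_ge1[of s] by linarith
  have Bm: "\<And>z. \<bar>snd (chain K h s \<omega> m) z\<bar> \<le> nrm s + real n * Mb"
  proof -
    fix z
    have "real m * Mb \<le> real n * Mb" using assms(3) Mb_pos by (intro mult_right_mono) auto
    then show "\<bar>snd (chain K h s \<omega> m) z\<bar> \<le> nrm s + real n * Mb"
      using chain_bound[OF assms(1,2), of m z] by linarith
  qed
  show "\<bar>hc (chain K h s \<omega> m)\<bar> \<le> Cb * (nrm s + real n * Mb) ^ Db"
    unfolding hc_def by (rule cfg_bound(1)[OF B1 Bm])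
  show "\<bar>cost K (chain K h s \<omega> m)\<bar> \<le> Cb * (nrm s + real n * Mb) ^ Db"
    by (rule cfg_bound(2)[OF B1 Bm])
qed

lemma Y_bound:
  assumes "reach s" "\<forall>n. good1 \<mu> (\<omega> n)"
  shows "\<bar>Y n s \<omega>\<bar> \<le> real (Suc n) * (Cb * (nrm s + real n * Mb) ^ Db)"
proof -
  let ?B = "Cb * (nrm s + real n * Mb) ^ Db"
  have "\<bar>Y n s \<omega>\<bar> \<le> \<bar>hc (chain K h s \<omega> n)\<bar> + \<bar>\<Sum>m<n. cost K (chain K h s \<omega> m)\<bar>"
    unfolding Y_def by (rule abs_triangle_ineq)
  also have "\<bar>\<Sum>m<n. cost K (chain K h s \<omega> m)\<bar> \<le> (\<Sum>m<n. \<bar>cost K (chain K h s \<omega> m)\<bar>)"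
    by (rule sum_abs)
  also have "\<dots> \<le> (\<Sum>m<n. ?B)"
    by (rule sum_mono) (rule chain_cfg_bound(2)[OF assms], simp)
  also have "\<bar>hc (chain K h s \<omega> n)\<bar> \<le> ?B"
    by (rule chain_cfg_bound(1)[OF assms]) simp
  finally show ?thesis by (simp add: algebra_simps)
qed

lemma Y_integrable:
  assumes "reach s"
  shows "integrable (omega \<mu>) (Y n s)"
proof -
  interpret O: prob_space "omega \<mu>" by (rule omega_prob)
  show ?thesis
  proof (rule O.integrable_const_bound)
    show "AE \<omega> in omega \<mu>. norm (Y n s \<omega>) \<le> real (Suc n) * (Cb * (nrm s + real n * Mb) ^ Db)"
      using good_AE
    proof eventually_elim
      case (elim \<omega>) show ?case using Y_bound[OF assms elim, of n] by simp
    qed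
    show "Y n s \<in> borel_measurable (omega \<mu>)" by (rule Y_meas)
  qed
qed

lemma hnxt_meas: "(\<lambda>x. hc (nxt K h s x)) \<in> borel_measurable (step_space \<mu>)"
  unfolding hc_def
  by (rule h_meas[OF nxt_meas[OF const_cfgmeas, of "\<lambda>x. x"]]) simp

lemma hnxt_integrable:
  assumes "reach s"
  shows "integrable (step_space \<mu>) (\<lambda>x. hc (nxt K h s x))"
proof -
  interpret S: prob_space "step_space \<mu>" by (rule step_prob)
  have B1: "1 \<le> nrm s + Mb" using nrm_ge1[of s] Mb_pos by simp
  show ?thesis
  proof (rule S.integrable_const_bound)
    show "AE x in step_space \<mu>. norm (hc (nxt K h s x)) \<le> Cb * (nrm s + Mb) ^ Db"
      using good1_AE
    proof eventually_elim
      case (elim x)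
      have "\<bar>snd (nxt K h s x) z\<bar> \<le> nrm s + Mb" for z
        using nxt_step_bound[OF assms elim, of z] nrm_comp[of s z] by linarith
      then show ?case unfolding hc_def using cfg_bound(1)[OF B1] by simp
    qed
  qed (rule hnxt_meas)
qed

lemma Y_shift: "Y (Suc n) s (case_nat x \<omega>) = cost K s + Y n (nxt K h s x) \<omega>"
proof -
  have "(\<Sum>m<Suc n. cost K (chain K h s (case_nat x \<omega>) m)) =
     cost K s + (\<Sum>m<n. cost K (chain K h s (case_nat x \<omega>) (Suc m)))"
    by (subst sum.lessThan_Suc_shift) simp
  then show ?thesis unfolding Y_def chain_shift by simp
qed

end


context setting begin

lemma int_fst_step:
  fixes f :: "('r \<Rightarrow> real) \<Rightarrow> real"
  assumes "integrable (step_space \<mu>) (\<lambda>x. f (fst x))"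
  shows "(\<integral>x. f (fst x) \<partial>step_space \<mu>) = (\<integral>u. f u \<partial>samp \<mu>)"
proof -
  interpret U: prob_space "uniform_measure lborel {0..1::real}" by (rule unif_prob)
  interpret S: prob_space "samp \<mu>" by (rule samp_prob)
  interpret P: pair_sigma_finite "samp \<mu>" "uniform_measure lborel {0..1::real}" ..
  have "(\<integral>x. f (fst x) \<partial>step_space \<mu>) = (\<integral>u. (\<integral>c. f (fst (u, c)) \<partial>uniform_measure lborel {0..1::real}) \<partial>samp \<mu>)"
    using P.integral_fst'[of "\<lambda>x. f (fst x)"] assms unfolding step_space_def by simp
  also have "\<dots> = (\<integral>u. f u \<partial>samp \<mu>)" by (simp add: U.prob_space)
  finally show ?thesis .
qed

lemma int_snd_step:
  fixes g :: "real \<Rightarrow> real"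
  assumes "integrable (step_space \<mu>) (\<lambda>x. g (snd x))"
  shows "(\<integral>x. g (snd x) \<partial>step_space \<mu>) = (\<integral>c. g c \<partial>uniform_measure lborel {0..1::real})"
proof -
  interpret U: prob_space "uniform_measure lborel {0..1::real}" by (rule unif_prob)
  interpret S: prob_space "samp \<mu>" by (rule samp_prob)
  interpret P: pair_sigma_finite "samp \<mu>" "uniform_measure lborel {0..1::real}" ..
  have "(\<integral>x. g (snd x) \<partial>step_space \<mu>) = (\<integral>u. (\<integral>c. g (snd (u, c)) \<partial>uniform_measure lborel {0..1::real}) \<partial>samp \<mu>)"
    using P.integral_fst'[of "\<lambda>x. g (snd x)"] assms unfolding step_space_def by simp
  also have "\<dots> = (\<integral>c. g c \<partial>uniform_measure lborel {0..1::real})" by (simp add: S.prob_space)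
  finally show ?thesis .
qed

lemma coin_integral:
  fixes p a b :: real
  assumes p: "0 \<le> p" "p \<le> 1"
  shows "(\<integral>c. (if c < p then a else b) \<partial>uniform_measure lborel {0..1::real}) = p * a + (1 - p) * b"
proof -
  interpret U: prob_space "uniform_measure lborel {0..1::real}" by (rule unif_prob)
  have e: "(\<lambda>c. if c < p then a else b) = (\<lambda>c. b + (a - b) * indicator {..<p} c)"
    by (auto simp: indicator_def fun_eq_iff)
  have sU: "{..<p} \<in> sets (uniform_measure lborel {0..1::real})" by simp
  have iI: "integrable (uniform_measure lborel {0..1::real}) (indicator {..<p} :: real \<Rightarrow> real)"
  proof (rule U.integrable_const_bound[where B=1])
    show "AE x in uniform_measure lborel {0..1::real}. norm (indicator {..<p} x :: real) \<le> 1"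
      by (rule AE_I2) (simp add: indicator_def)
    show "(indicator {..<p} :: real \<Rightarrow> real) \<in> borel_measurable (uniform_measure lborel {0..1::real})"
      using sU by (rule borel_measurable_indicator)
  qed
  have m: "measure (uniform_measure lborel {0..1::real}) {..<p} = p"
  proof -
    have "emeasure (uniform_measure lborel {0..1::real}) {..<p} = emeasure lborel ({0..1} \<inter> {..<p}) / emeasure lborel {0..1::real}"
      by (rule emeasure_uniform_measure) auto
    also have "{0..1} \<inter> {..<p} = {0..<p}" using p by auto
    finally have "emeasure (uniform_measure lborel {0..1::real}) {..<p} = ennreal p" using p by (simp add: divide_ennreal_def)
    then show ?thesis unfolding measure_def using p by simp
  qed
  have "(\<integral>c. b + (a - b) * indicator {..<p} c \<partial>uniform_measure lborel {0..1::real})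
      = b + (a - b) * (\<integral>c. indicator {..<p} c \<partial>uniform_measure lborel {0..1::real})"
    using iI by (simp add: Bochner_Integration.integral_add integrable_mult_right)
  also have "\<dots> = b + (a - b) * p" using m by simp
  finally show ?thesis unfolding e by (simp add: algebra_simps)
qed

lemma pre_step:
  assumes r: "reach s"
  shows "cost K s + (\<integral>x. hc (nxt K h s x) \<partial>step_space \<mu>) = pre_exp K \<mu> h (fst s) (snd s)"
proof -
  interpret S: prob_space "step_space \<mu>" by (rule step_prob)
  obtain l w where s: "s = (l, w)" by (cases s)
  have iH: "integrable (step_space \<mu>) (\<lambda>x. hc (nxt K h s x))" by (rule hnxt_integrable[OF r])
  show ?thesis
  proof (cases "K l")
    case (Assign l' F)
    have eq: "(\<lambda>x. hc (nxt K h s x)) = (\<lambda>x. (\<lambda>u. h l' (F w u)) (fst x))"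
      by (rule ext) (simp add: hc_def nxt_def s Assign)
    have "(\<integral>x. hc (nxt K h s x) \<partial>step_space \<mu>) = (\<integral>u. h l' (F w u) \<partial>samp \<mu>)"
      unfolding eq by (rule int_fst_step) (use iH eq in simp)
    then show ?thesis using Assign by (simp add: s cost_def pre_exp_def S.prob_space)
  next
    case (Branch \<phi> l1 l2)
    have eq: "(\<lambda>x. hc (nxt K h s x)) = (\<lambda>x. if w \<in> \<phi> then h l1 w else h l2 w)"
      by (rule ext) (simp add: hc_def nxt_def s Branch)
    show ?thesis unfolding eq using Branch by (simp add: s cost_def pre_exp_def S.prob_space)
  next
    case (Probab p l1 l2)
    have eq: "(\<lambda>x. hc (nxt K h s x)) = (\<lambda>x. (\<lambda>c. if c < p then h l1 w else h l2 w) (snd x))"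
      by (rule ext) (simp add: hc_def nxt_def s Probab)
    have "(\<integral>x. hc (nxt K h s x) \<partial>step_space \<mu>) = p * h l1 w + (1 - p) * h l2 w"
      unfolding eq
      by (subst int_snd_step) (use iH eq probab_p[OF Probab] coin_integral in auto)
    then show ?thesis using Probab by (simp add: s cost_def pre_exp_def S.prob_space)
  next
    case (Nondet l1 l2)
    have eq: "(\<lambda>x. hc (nxt K h s x)) = (\<lambda>x. max (h l1 w) (h l2 w))"
      by (rule ext) (simp add: hc_def nxt_def s Nondet)
    show ?thesis unfolding eq using Nondet by (simp add: s cost_def pre_exp_def S.prob_space)
  next
    case (Tick R l')
    have eq: "(\<lambda>x. hc (nxt K h s x)) = (\<lambda>x. h l' w)"
      by (rule ext) (simp add: hc_def nxt_def s Tick)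
    show ?thesis unfolding eq using Tick by (simp add: s cost_def pre_exp_def S.prob_space)
  next
    case Terminal
    have eq: "(\<lambda>x. hc (nxt K h s x)) = (\<lambda>x. h l w)"
      by (rule ext) (simp add: hc_def nxt_def s Terminal)
    show ?thesis unfolding eq using Terminal by (simp add: s cost_def pre_exp_def S.prob_space)
  qed
qed

lemma pre_ge: "reach s \<Longrightarrow> pre_exp K \<mu> h (fst s) (snd s) \<ge> hc s"
proof -
  assume r: "reach s"
  show ?thesis
  proof (cases "fst s = lout")
    case True then show ?thesis by (simp add: pre_exp_def Kout hc_def)
  next
    case False then show ?thesis using h_pre[OF False reach_I[OF r]] by (simp add: hc_def)
  qed
qed

end


context setting begin

lemma Y_decomp:
  assumes r: "reach s"
  shows "integrable (step_space \<mu>) (\<lambda>x. \<integral>\<omega>'. Y n s (case_nat x \<omega>') \<partial>omega \<mu>)"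
    and "(\<integral>\<omega>. Y n s \<omega> \<partial>omega \<mu>) = (\<integral>x. (\<integral>\<omega>'. Y n s (case_nat x \<omega>') \<partial>omega \<mu>) \<partial>step_space \<mu>)"
proof -
  interpret Sp: prob_space "step_space \<mu>" by (rule step_prob)
  interpret SQ: sequence_space "step_space \<mu>" ..
  interpret O: prob_space "omega \<mu>" by (rule omega_prob)
  interpret P2: pair_sigma_finite "step_space \<mu>" "omega \<mu>" ..
  have cnm: "(\<lambda>(x, \<omega>). case_nat x \<omega>) \<in> measurable (step_space \<mu> \<Otimes>\<^sub>M omega \<mu>) (omega \<mu>)"
    unfolding omega_def by (rule measurable_case_nat'[where f=fst and g=snd, unfolded case_prod_beta[symmetric]]) simp_all
  have D: "distr (step_space \<mu> \<Otimes>\<^sub>M omega \<mu>) (omega \<mu>) (\<lambda>(x, \<omega>). case_nat x \<omega>) = omega \<mu>"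
    unfolding omega_def by (rule SQ.PiM_iter)
  have Yi: "integrable (omega \<mu>) (Y n s)" by (rule Y_integrable[OF r])
  have Yi2: "integrable (step_space \<mu> \<Otimes>\<^sub>M omega \<mu>) (\<lambda>p. Y n s ((\<lambda>(x, \<omega>). case_nat x \<omega>) p))"
    using integrable_distr_eq[OF cnm Y_meas, of n s] Yi D by simp
  show "integrable (step_space \<mu>) (\<lambda>x. \<integral>\<omega>'. Y n s (case_nat x \<omega>') \<partial>omega \<mu>)"
    using P2.integrable_fst'[OF Yi2] by simp
  have "(\<integral>\<omega>. Y n s \<omega> \<partial>omega \<mu>) = (\<integral>\<omega>. Y n s \<omega> \<partial>distr (step_space \<mu> \<Otimes>\<^sub>M omega \<mu>) (omega \<mu>) (\<lambda>(x, \<omega>). case_nat x \<omega>))"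
    using D by simp
  also have "\<dots> = (\<integral>p. Y n s ((\<lambda>(x, \<omega>). case_nat x \<omega>) p) \<partial>(step_space \<mu> \<Otimes>\<^sub>M omega \<mu>))"
    by (rule integral_distr[OF cnm Y_meas])
  also have "\<dots> = (\<integral>x. (\<integral>\<omega>'. Y n s ((\<lambda>(x, \<omega>). case_nat x \<omega>) (x, \<omega>')) \<partial>omega \<mu>) \<partial>step_space \<mu>)"
    by (rule P2.integral_fst'[OF Yi2, symmetric])
  finally show "(\<integral>\<omega>. Y n s \<omega> \<partial>omega \<mu>) = (\<integral>x. (\<integral>\<omega>'. Y n s (case_nat x \<omega>') \<partial>omega \<mu>) \<partial>step_space \<mu>)"
    by simp
qed

lemma Y_ge: "reach s \<Longrightarrow> (\<integral>\<omega>. Y n s \<omega> \<partial>omega \<mu>) \<ge> hc s"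
proof (induction n arbitrary: s)
  case 0
  interpret O: prob_space "omega \<mu>" by (rule omega_prob)
  show ?case by (simp add: Y_def O.prob_space)
next
  case (Suc n)
  interpret Sp: prob_space "step_space \<mu>" by (rule step_prob)
  interpret O: prob_space "omega \<mu>" by (rule omega_prob)
  let ?G = "\<lambda>x. \<integral>\<omega>'. Y (Suc n) s (case_nat x \<omega>') \<partial>omega \<mu>"
  have iG: "integrable (step_space \<mu>) ?G" by (rule Y_decomp(1)[OF Suc.prems])
  have iR: "integrable (step_space \<mu>) (\<lambda>x. cost K s + hc (nxt K h s x))"
    by (rule Bochner_Integration.integrable_add[OF Sp.integrable_const hnxt_integrable[OF Suc.prems]])
  have ae: "AE x in step_space \<mu>. cost K s + hc (nxt K h s x) \<le> ?G x"
    using good1_AE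
  proof eventually_elim
    case (elim x)
    have rn: "reach (nxt K h s x)" by (rule reach_nxt[OF Suc.prems elim])
    have "?G x = (\<integral>\<omega>'. cost K s + Y n (nxt K h s x) \<omega>' \<partial>omega \<mu>)"
      by (simp add: Y_shift)
    also have "\<dots> = cost K s + (\<integral>\<omega>'. Y n (nxt K h s x) \<omega>' \<partial>omega \<mu>)"
      using Bochner_Integration.integral_add[OF O.integrable_const Y_integrable[OF rn]]
      by (simp add: O.prob_space)
    finally show ?case using Suc.IH[OF rn] by simp
  qed
  have "hc s \<le> cost K s + (\<integral>x. hc (nxt K h s x) \<partial>step_space \<mu>)"
    using pre_step[OF Suc.prems] pre_ge[OF Suc.prems] by simp
  also have "\<dots> = (\<integral>x. cost K s + hc (nxt K h s x) \<partial>step_space \<mu>)"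
    using Bochner_Integration.integral_add[OF Sp.integrable_const hnxt_integrable[OF Suc.prems]]
    by (simp add: Sp.prob_space)
  also have "\<dots> \<le> (\<integral>x. ?G x \<partial>step_space \<mu>)"
    by (rule integral_mono_AE[OF iR iG ae])
  also have "\<dots> = (\<integral>\<omega>. Y (Suc n) s \<omega> \<partial>omega \<mu>)"
    by (rule Y_decomp(2)[OF Suc.prems, symmetric])
  finally show ?case .
qed

end


lemma poly_exp_lim:
  fixes A M c :: real and D :: nat
  assumes A: "A > 0" and M: "M > 0" and c: "c > 0"
  shows "(\<lambda>m. (A + real m * M) ^ D * exp (-(c * real m))) \<longlonglongrightarrow> 0"
proof -
  define y where "y m = c * A / M + c * real m" for m :: nat
  have ylim: "filterlim y at_top sequentially"
    unfolding y_def
    by (rule filterlim_tendsto_add_at_top[OF tendsto_const])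
       (rule filterlim_tendsto_pos_mult_at_top[OF tendsto_const c filterlim_real_sequentially])
  have l1: "(\<lambda>m. y m ^ D / exp (y m)) \<longlonglongrightarrow> 0"
    by (rule filterlim_compose[OF tendsto_power_div_exp_0 ylim])
  have l2: "(\<lambda>m. ((M / c) ^ D * exp (c * A / M)) * (y m ^ D / exp (y m))) \<longlonglongrightarrow> 0"
    by (rule tendsto_mult_right_zero[OF l1])
  have eq: "((M / c) ^ D * exp (c * A / M)) * (y m ^ D / exp (y m)) = (A + real m * M) ^ D * exp (-(c * real m))" for m
  proof -
    have "(M / c) * y m = A + real m * M" unfolding y_def using M c by (simp add: field_simps)
    then have p: "(M / c) ^ D * y m ^ D = (A + real m * M) ^ D" by (metis power_mult_distrib)
    have e: "exp (y m) = exp (c * A / M) * exp (c * real m)" unfolding y_def by (simp add: exp_add)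
    have "((M / c) ^ D * exp (c * A / M)) * (y m ^ D / exp (y m)) = ((M / c) ^ D * y m ^ D) * (exp (c * A / M) / exp (y m))"
      by (simp add: field_simps)
    also have "exp (c * A / M) / exp (y m) = exp (-(c * real m))"
      unfolding e by (simp add: exp_minus field_simps)
    finally show ?thesis unfolding p .
  qed
  show ?thesis using l2 unfolding eq .
qed


context setting begin

definition Q :: "nat \<Rightarrow> real" where
  "Q m = Cb * (nrm (lin, v) + real m * Mb) ^ Db"

definition E :: "nat \<Rightarrow> (nat \<Rightarrow> ('r \<Rightarrow> real) \<times> real) set" where
  "E n = {\<omega> \<in> space (omega \<mu>). \<forall>m\<le>n. fst (chain K h (lin, v) \<omega> m) \<noteq> lout}"

lemma E_single: "{\<omega> \<in> space (omega \<mu>). fst (chain K h (lin, v) \<omega> m) \<noteq> lout} \<in> sets (omega \<mu>)"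
proof -
  have f: "(\<lambda>\<omega>. fst (chain K h (lin, v) \<omega> m)) \<in> measurable (omega \<mu>) (count_space UNIV)"
    using chain_meas_omega[of "(lin, v)" m] by (simp add: cfgmeas_def)
  have "(\<lambda>\<omega>. fst (chain K h (lin, v) \<omega> m)) -` (UNIV - {lout}) \<inter> space (omega \<mu>) \<in> sets (omega \<mu>)"
    by (rule measurable_sets[OF f]) simp
  moreover have "(\<lambda>\<omega>. fst (chain K h (lin, v) \<omega> m)) -` (UNIV - {lout}) \<inter> space (omega \<mu>) =
      {\<omega> \<in> space (omega \<mu>). fst (chain K h (lin, v) \<omega> m) \<noteq> lout}" by blast
  ultimately show ?thesis by simp
qed

lemma E_sets: "E n \<in> sets (omega \<mu>)"
proof (induction n)
  case 0
  have "E 0 = {\<omega> \<in> space (omega \<mu>). fst (chain K h (lin, v) \<omega> 0) \<noteq> lout}" unfolding E_def by auto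
  then show ?case using E_single[of 0] by simp
next
  case (Suc n)
  have "E (Suc n) = E n \<inter> {\<omega> \<in> space (omega \<mu>). fst (chain K h (lin, v) \<omega> (Suc n)) \<noteq> lout}"
    unfolding E_def by (auto simp: le_Suc_eq)
  then show ?case using Suc E_single[of "Suc n"] by simp
qed

lemma E_mono: "m \<le> n \<Longrightarrow> E n \<subseteq> E m"
proof
  fix \<omega> assume mn: "m \<le> n" and "\<omega> \<in> E n"
  then have sp: "\<omega> \<in> space (omega \<mu>)" and H: "\<And>k. k \<le> n \<Longrightarrow> fst (chain K h (lin, v) \<omega> k) \<noteq> lout"
    unfolding E_def by auto
  show "\<omega> \<in> E m" unfolding E_def using sp H mn by simp
qed

lemma Q_nonneg: "0 \<le> Q m"
proof -
  have "0 \<le> real m * Mb" using Mb_pos by simp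
  then have "0 \<le> nrm (lin, v) + real m * Mb" using nrm_ge1[of "(lin, v)"] by linarith
  then show ?thesis unfolding Q_def using CbDb(1) by simp
qed

lemma cfg_E_bound:
  assumes sp: "\<omega> \<in> space (omega \<mu>)" and g: "\<forall>n. good1 \<mu> (\<omega> n)"
  shows "\<bar>cost K (chain K h (lin, v) \<omega> m)\<bar> \<le> Q m * indicator (E m) \<omega>
      \<and> \<bar>hc (chain K h (lin, v) \<omega> m)\<bar> \<le> Q m * indicator (E m) \<omega>"
proof (cases "\<omega> \<in> E m")
  case True
  then show ?thesis
    using chain_cfg_bound[OF reach_init g, of m m] unfolding Q_def by simp
next
  case False
  then obtain m' where m': "m' \<le> m" "fst (chain K h (lin, v) \<omega> m') = lout"
    using sp unfolding E_def by auto
  have "chain K h (lin, v) \<omega> m = chain K h (lin, v) \<omega> m'"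
    by (rule chain_lout[OF Kout m'(2) m'(1)])
  then have fl: "fst (chain K h (lin, v) \<omega> m) = lout" using m'(2) by simp
  have c0: "cost K (chain K h (lin, v) \<omega> m) = 0"
    unfolding cost_def using fl Kout by simp
  have h0: "hc (chain K h (lin, v) \<omega> m) = 0"
    unfolding hc_def using fl h_out by simp
  show ?thesis using False c0 h0 by simp
qed

lemma adm: "admissible K \<mu> lin v (sch K h)"
  unfolding admissible_def
proof
  fix n
  let ?f = "\<lambda>\<omega>. chain K h (lin, v) \<omega> n"
  have fl: "(\<lambda>\<omega>. fst (?f \<omega>)) \<in> measurable (omega \<mu>) (count_space UNIV)"
    and fv: "\<And>x. (\<lambda>\<omega>. snd (?f \<omega>) x) \<in> borel_measurable (omega \<mu>)"
    using chain_meas_omega[of "(lin, v)" n] by (auto simp: cfgmeas_def)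
  have pl: "(\<lambda>\<omega>. case K l of Nondet l1 l2 \<Rightarrow> h l2 (snd (?f \<omega>)) \<le> h l1 (snd (?f \<omega>)) | _ \<Rightarrow> True)
      \<in> measurable (omega \<mu>) (count_space UNIV)" for l
  proof (cases "K l")
    case (Nondet l1 l2)
    have hm1: "(\<lambda>\<omega>. h l1 (snd (?f \<omega>))) \<in> borel_measurable (omega \<mu>)"
      using is_poly_meas[OF h_is_poly, of "\<lambda>\<omega>. snd (?f \<omega>)" "omega \<mu>"] fv by simp
    have hm2: "(\<lambda>\<omega>. h l2 (snd (?f \<omega>))) \<in> borel_measurable (omega \<mu>)"
      using is_poly_meas[OF h_is_poly, of "\<lambda>\<omega>. snd (?f \<omega>)" "omega \<mu>"] fv by simp
    have "(\<lambda>\<omega>. h l2 (snd (?f \<omega>)) \<le> h l1 (snd (?f \<omega>))) \<in> measurable (omega \<mu>) (count_space UNIV)"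
      using borel_measurable_le[OF hm2 hm1] by (simp add: pred_def)
    then show ?thesis using Nondet by simp
  qed simp_all
  have "(\<lambda>\<omega>. (\<lambda>l \<omega>. case K l of Nondet l1 l2 \<Rightarrow> h l2 (snd (?f \<omega>)) \<le> h l1 (snd (?f \<omega>)) | _ \<Rightarrow> True) (fst (?f \<omega>)) \<omega>)
      \<in> measurable (omega \<mu>) (count_space UNIV)"
    by (rule measurable_compose_countable'[OF pl fl]) (rule countable_finite, simp)
  then show "(\<lambda>\<omega>. sch K h (hist K (sch K h) lin v \<omega> n)) \<in> measurable (omega \<mu>) (count_space UNIV)"
    unfolding sch_hist by simp
qed

lemma PE_ex: "\<exists>a b N. a > 0 \<and> b > 0 \<and> (\<forall>n\<ge>N. measure (omega \<mu>) (E n) \<le> a * exp (- b * real n))"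
proof -
  from conc vI obtain a b where ab: "a > 0" "b > 0" and
    N: "\<exists>N. \<forall>n\<ge>N. \<forall>\<sigma>. admissible K \<mu> lin v \<sigma> \<longrightarrow>
           measure (omega \<mu>) {\<omega>\<in>space (omega \<mu>). \<forall>m\<le>n. fst (run K \<sigma> lin v \<omega> m) \<noteq> lout}
           \<le> a * exp (- b * real n)"
    unfolding concentration_def by blast
  from N obtain N where N: "\<forall>n\<ge>N. \<forall>\<sigma>. admissible K \<mu> lin v \<sigma> \<longrightarrow>
           measure (omega \<mu>) {\<omega>\<in>space (omega \<mu>). \<forall>m\<le>n. fst (run K \<sigma> lin v \<omega> m) \<noteq> lout}
           \<le> a * exp (- b * real n)" by blast
  have "\<forall>n\<ge>N. measure (omega \<mu>) (E n) \<le> a * exp (- b * real n)"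
  proof (intro allI impI)
    fix n assume "N \<le> n"
    then have "measure (omega \<mu>) {\<omega>\<in>space (omega \<mu>). \<forall>m\<le>n. fst (run K (sch K h) lin v \<omega> m) \<noteq> lout}
           \<le> a * exp (- b * real n)" using N adm by blast
    then show "measure (omega \<mu>) (E n) \<le> a * exp (- b * real n)"
      unfolding E_def run_sch .
  qed
  with ab show ?thesis by blast
qed

end


context setting begin

lemma main: "ereal (h lin v) \<le> supval K \<mu> lin v"
proof -
  interpret O: prob_space "omega \<mu>" by (rule omega_prob)
  obtain a b N where ab: "a > 0" "b > 0"
    and PE: "\<And>n. n \<ge> N \<Longrightarrow> measure (omega \<mu>) (E n) \<le> a * exp (- b * real n)"
    using PE_ex by blast
  define c where "c m \<omega> = cost K (chain K h (lin, v) \<omega> m)" for m \<omega>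
  define hn where "hn m \<omega> = hc (chain K h (lin, v) \<omega> m)" for m \<omega>
  have good: "AE \<omega> in omega \<mu>. \<forall>m. \<bar>c m \<omega>\<bar> \<le> Q m * indicator (E m) \<omega> \<and> \<bar>hn m \<omega>\<bar> \<le> Q m * indicator (E m) \<omega>"
    using good_AE AE_space
  proof eventually_elim
    case (elim \<omega>)
    show ?case unfolding c_def hn_def using cfg_E_bound[OF elim(2) elim(1)] by blast
  qed
  have cm: "c m \<in> borel_measurable (omega \<mu>)" for m
    unfolding c_def[abs_def] by (rule cost_meas[OF chain_meas_omega])
  have hm: "hn m \<in> borel_measurable (omega \<mu>)" for m
    unfolding hn_def[abs_def] hc_def by (rule h_meas[OF chain_meas_omega])
  have ind_le: "Q m * indicator (E m) \<omega> \<le> Q m" for m \<omega>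
    using Q_nonneg[of m] by (simp add: indicator_def)
  have iQ: "integrable (omega \<mu>) (\<lambda>\<omega>. Q m * indicator (E m) \<omega>)" for m
  proof (rule O.integrable_const_bound[where B="Q m"])
    show "AE x in omega \<mu>. norm (Q m * indicator (E m) x) \<le> Q m"
      using Q_nonneg[of m] by (intro AE_I2) (simp add: indicator_def)
    show "(\<lambda>\<omega>. Q m * indicator (E m) \<omega>) \<in> borel_measurable (omega \<mu>)"
      using E_sets[of m] by simp
  qed
  have ic: "integrable (omega \<mu>) (c m)" for m
  proof (rule O.integrable_const_bound[where B="Q m"])
    show "AE x in omega \<mu>. norm (c m x) \<le> Q m"
      using good proof eventually_elim
      case (elim x) then show ?case using ind_le[of m x] by (smt (verit) real_norm_def)
    qed
  qed (rule cm)
  have ih: "integrable (omega \<mu>) (hn m)" for m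
  proof (rule O.integrable_const_bound[where B="Q m"])
    show "AE x in omega \<mu>. norm (hn m x) \<le> Q m"
      using good proof eventually_elim
      case (elim x) then show ?case using ind_le[of m x] by (smt (verit) real_norm_def)
    qed
  qed (rule hm)
  have intQ: "(\<integral>\<omega>. Q m * indicator (E m) \<omega> \<partial>omega \<mu>) = Q m * measure (omega \<mu>) (E m)" for m
  proof -
    have "E m \<inter> space (omega \<mu>) = E m" using E_sets[of m] sets.sets_into_space by blast
    then show ?thesis by simp
  qed
  have absc: "(\<integral>\<omega>. norm (c m \<omega>) \<partial>omega \<mu>) \<le> Q m * measure (omega \<mu>) (E m)" for m
  proof -
    have "(\<integral>\<omega>. norm (c m \<omega>) \<partial>omega \<mu>) \<le> (\<integral>\<omega>. Q m * indicator (E m) \<omega> \<partial>omega \<mu>)"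
    proof (rule integral_mono_AE)
      show "integrable (omega \<mu>) (\<lambda>\<omega>. norm (c m \<omega>))" using ic[of m] by simp
      show "integrable (omega \<mu>) (\<lambda>\<omega>. Q m * indicator (E m) \<omega>)" by (rule iQ)
      show "AE x in omega \<mu>. norm (c m x) \<le> Q m * indicator (E m) x" using good by eventually_elim simp
    qed
    then show ?thesis unfolding intQ .
  qed
  have absh: "\<bar>\<integral>\<omega>. hn m \<omega> \<partial>omega \<mu>\<bar> \<le> Q m * measure (omega \<mu>) (E m)" for m
  proof -
    have "\<bar>\<integral>\<omega>. hn m \<omega> \<partial>omega \<mu>\<bar> \<le> (\<integral>\<omega>. norm (hn m \<omega>) \<partial>omega \<mu>)"
      using integral_norm_bound[of "omega \<mu>" "hn m"] by simp
    also have "\<dots> \<le> (\<integral>\<omega>. Q m * indicator (E m) \<omega> \<partial>omega \<mu>)"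
    proof (rule integral_mono_AE)
      show "integrable (omega \<mu>) (\<lambda>\<omega>. norm (hn m \<omega>))" using ih[of m] by simp
      show "integrable (omega \<mu>) (\<lambda>\<omega>. Q m * indicator (E m) \<omega>)" by (rule iQ)
      show "AE x in omega \<mu>. norm (hn m x) \<le> Q m * indicator (E m) x" using good by eventually_elim simp
    qed
    also have "\<dots> = Q m * measure (omega \<mu>) (E m)" by (rule intQ)
    finally show ?thesis .
  qed
  have nrm0: "nrm (lin, v) > 0" using nrm_ge1[of "(lin, v)"] by simp
  have L1: "(\<lambda>m. (nrm (lin, v) + real m * Mb) ^ Db * exp (-((b / 2) * real m))) \<longlonglongrightarrow> 0"
    by (rule poly_exp_lim[OF nrm0 Mb_pos]) (use ab in simp)
  have L2: "(\<lambda>m. (nrm (lin, v) + real m * Mb) ^ Db * exp (-(b * real m))) \<longlonglongrightarrow> 0"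
    by (rule poly_exp_lim[OF nrm0 Mb_pos ab(2)])
  have L0: "(\<lambda>m. exp (-(b * real m))) \<longlonglongrightarrow> 0"
    using poly_exp_lim[OF nrm0 Mb_pos ab(2), of 0] by simp
  have QE: "Q m * measure (omega \<mu>) (E m) \<le> (Cb * a) * ((nrm (lin, v) + real m * Mb) ^ Db * exp (-(b * real m)))"
    if "m \<ge> N" for m
  proof -
    have "Q m * measure (omega \<mu>) (E m) \<le> Q m * (a * exp (- b * real m))"
      using PE[OF that] Q_nonneg[of m] by (rule mult_left_mono)
    then show ?thesis unfolding Q_def by (simp add: algebra_simps)
  qed
  have sumc: "summable (\<lambda>m. \<integral>\<omega>. norm (c m \<omega>) \<partial>omega \<mu>)"
  proof (rule summable_comparison_test_ev)
    show "summable (\<lambda>m. (Cb * a) * exp (- (b / 2)) ^ m)"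
      using ab by (intro summable_mult) simp
    have ev1: "eventually (\<lambda>m. (nrm (lin, v) + real m * Mb) ^ Db * exp (-((b / 2) * real m)) < 1) sequentially"
      using L1 by (rule order_tendstoD(2)) simp
    have ev2: "eventually (\<lambda>m. m \<ge> N) sequentially" by (rule eventually_ge_at_top)
    show "eventually (\<lambda>m. norm (\<integral>\<omega>. norm (c m \<omega>) \<partial>omega \<mu>) \<le> (Cb * a) * exp (- (b / 2)) ^ m) sequentially"
      using ev1 ev2
    proof eventually_elim
      case (elim m)
      define P where "P = (nrm (lin, v) + real m * Mb) ^ Db"
      define e where "e = exp (-((b / 2) * real m))"
      have e0: "0 \<le> e" unfolding e_def by simp
      have ee: "exp (-(b * real m)) = e * e" unfolding e_def by (simp add: exp_add[symmetric])
      have eg: "exp (- (b / 2)) ^ m = e" unfolding e_def by (simp add: exp_of_nat_mult[symmetric] algebra_simps)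
      have Pe: "P * e \<le> 1" using elim(1) unfolding P_def e_def by simp
      have nn: "0 \<le> (\<integral>\<omega>. norm (c m \<omega>) \<partial>omega \<mu>)" by simp
      have "(\<integral>\<omega>. norm (c m \<omega>) \<partial>omega \<mu>) \<le> (Cb * a) * (P * exp (-(b * real m)))"
        using absc[of m] QE[OF elim(2)] unfolding P_def by linarith
      also have "\<dots> = (Cb * a * e) * (P * e)" unfolding ee by (simp add: algebra_simps)
      also have "\<dots> \<le> (Cb * a * e) * 1"
        using CbDb(1) ab(1) e0 Pe by (intro mult_left_mono) auto
      finally show ?case using nn eg by simp
    qed
  qed
  have INTs: "(\<Inter>n. E n) \<in> sets (omega \<mu>)"
    using E_sets by (intro sets.countable_INT) auto
  have "measure (omega \<mu>) (\<Inter>n. E n) \<le> 0"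
  proof (rule LIMSEQ_le_const[of "\<lambda>n. a * exp (-(b * real n))"])
    show "(\<lambda>n. a * exp (-(b * real n))) \<longlonglongrightarrow> 0" by (rule tendsto_mult_right_zero[OF L0])
    show "\<exists>N'. \<forall>n\<ge>N'. measure (omega \<mu>) (\<Inter>n. E n) \<le> a * exp (-(b * real n))"
    proof (intro exI allI impI)
      fix n assume "N \<le> n"
      have "measure (omega \<mu>) (\<Inter>n. E n) \<le> measure (omega \<mu>) (E n)"
        by (rule O.finite_measure_mono[OF _ E_sets]) blast
      also have "\<dots> \<le> a * exp (-(b * real n))" using PE[OF \<open>N \<le> n\<close>] by simp
      finally show "measure (omega \<mu>) (\<Inter>n. E n) \<le> a * exp (-(b * real n))" .
    qed
  qed
  then have "measure (omega \<mu>) (\<Inter>n. E n) = 0" using measure_nonneg[of "omega \<mu>" "\<Inter>n. E n"] by linarith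
  then have "(\<Inter>n. E n) \<in> null_sets (omega \<mu>)"
    using INTs by (simp add: null_sets_def O.emeasure_eq_measure)
  then have termi: "AE \<omega> in omega \<mu>. \<omega> \<notin> (\<Inter>n. E n)" by (rule AE_not_in)
  have sumAE: "AE \<omega> in omega \<mu>. summable (\<lambda>m. norm (c m \<omega>))"
    using termi good
  proof eventually_elim
    case (elim \<omega>)
    then obtain n where n: "\<omega> \<notin> E n" by blast
    have "norm (c (i + n) \<omega>) = 0" for i
    proof -
      have "\<omega> \<notin> E (i + n)" using n E_mono[of n "i + n"] by auto
      then have "\<bar>c (i + n) \<omega>\<bar> \<le> 0" using elim(2)[rule_format, of "i + n"] by simp
      then show ?thesis by simp
    qed
    then have "summable (\<lambda>i. norm (c (i + n) \<omega>))" by simp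
    then show ?case by (rule summable_iff_shift[THEN iffD1])
  qed
  have TCi: "integrable (omega \<mu>) (\<lambda>\<omega>. \<Sum>m. c m \<omega>)"
    by (rule integrable_suminf[OF ic sumAE sumc])
  have TCeq: "(\<integral>\<omega>. (\<Sum>m. c m \<omega>) \<partial>omega \<mu>) = (\<Sum>m. integral\<^sup>L (omega \<mu>) (c m))"
    by (rule integral_suminf[OF ic sumAE sumc])
  have sumi: "summable (\<lambda>m. integral\<^sup>L (omega \<mu>) (c m))"
    by (rule summable_integral[OF ic sumAE sumc])
  have Yeq: "(\<integral>\<omega>. Y n (lin, v) \<omega> \<partial>omega \<mu>) = integral\<^sup>L (omega \<mu>) (hn n) + (\<Sum>m<n. integral\<^sup>L (omega \<mu>) (c m))" for n
  proof -
    have "(\<lambda>\<omega>. Y n (lin, v) \<omega>) = (\<lambda>\<omega>. hn n \<omega> + (\<Sum>m<n. c m \<omega>))"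
      unfolding Y_def hn_def c_def by simp
    then have "(\<integral>\<omega>. Y n (lin, v) \<omega> \<partial>omega \<mu>) = (\<integral>\<omega>. hn n \<omega> + (\<Sum>m<n. c m \<omega>) \<partial>omega \<mu>)" by simp
    also have "\<dots> = integral\<^sup>L (omega \<mu>) (hn n) + (\<integral>\<omega>. (\<Sum>m<n. c m \<omega>) \<partial>omega \<mu>)"
      by (rule Bochner_Integration.integral_add[OF ih Bochner_Integration.integrable_sum[OF ic]])
    also have "(\<integral>\<omega>. (\<Sum>m<n. c m \<omega>) \<partial>omega \<mu>) = (\<Sum>m<n. integral\<^sup>L (omega \<mu>) (c m))"
      by (rule Bochner_Integration.integral_sum[OF ic])
    finally show ?thesis .
  qed
  have hlim: "(\<lambda>n. integral\<^sup>L (omega \<mu>) (hn n)) \<longlonglongrightarrow> 0"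
  proof (rule Lim_null_comparison)
    show "eventually (\<lambda>n. norm (integral\<^sup>L (omega \<mu>) (hn n)) \<le> (Cb * a) * ((nrm (lin, v) + real n * Mb) ^ Db * exp (-(b * real n)))) sequentially"
      using eventually_ge_at_top[of N]
    proof eventually_elim
      case (elim n) then show ?case using absh[of n] QE[of n] by simp
    qed
    show "(\<lambda>n. (Cb * a) * ((nrm (lin, v) + real n * Mb) ^ Db * exp (-(b * real n)))) \<longlonglongrightarrow> 0"
      by (rule tendsto_mult_right_zero[OF L2])
  qed
  have Ylim: "(\<lambda>n. \<integral>\<omega>. Y n (lin, v) \<omega> \<partial>omega \<mu>) \<longlonglongrightarrow> 0 + (\<Sum>m. integral\<^sup>L (omega \<mu>) (c m))"
    unfolding Yeq by (rule tendsto_add[OF hlim summable_LIMSEQ[OF sumi]])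
  have "h lin v \<le> (\<Sum>m. integral\<^sup>L (omega \<mu>) (c m))"
  proof (rule LIMSEQ_le_const[OF Ylim[simplified]])
    show "\<exists>N. \<forall>n\<ge>N. h lin v \<le> (\<integral>\<omega>. Y n (lin, v) \<omega> \<partial>omega \<mu>)"
      using Y_ge[OF reach_init] by (simp add: hc_def)
  qed
  also have "\<dots> = expected_cost K \<mu> (sch K h) lin v"
    unfolding expected_cost_def total_cost_def run_sch TCeq[symmetric] c_def ..
  finally have "ereal (h lin v) \<le> ereal (expected_cost K \<mu> (sch K h) lin v)" by simp
  also have "\<dots> \<le> supval K \<mu> lin v"
    unfolding supval_def using adm by (intro SUP_upper) simp
  finally show ?thesis .
qed

end


theorem theorem6p6:
  fixes K :: "'l::finite \<Rightarrow> ('l, 'v::finite, 'r::finite) lkind"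
    and \<mu> :: "'r \<Rightarrow> real measure"
    and lin lout :: 'l
    and I :: "'l \<Rightarrow> ('v \<Rightarrow> real) set"
    and h :: "'l \<Rightarrow> ('v \<Rightarrow> real) \<Rightarrow> real"
    and d :: nat
    and v :: "'v \<Rightarrow> real"
  assumes "valid_cfg K lout \<mu>"
    and "linear_invariant K \<mu> lin I"
    and "plcs K \<mu> I lout d h"
    and "concentration K \<mu> lin lout I"
    and "bounded_update K \<mu> I"
    and "v \<in> I lin"
  shows "supval K \<mu> lin v \<ge> ereal (h lin v)"
proof -
  interpret setting K \<mu> lin lout I h d v
    using assms by unfold_locales
  show ?thesis by (rule main)
qed

end
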